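(* Let the setting described in the context hold, with the sequential transmission protocol (TP1). Then for every $t\in\{0,\kappa,2\kappa,\ldots\}$ the finite-horizon optimal control problem $$\min_{\eta_t,\Theta_t}\ \mathbb{E}_{x_t}\big[x_{t:N+1}^\top\mathcal{Q}x_{t:N+1}+(u^a_{t:N})^\top\mathcal{R}u^a_{t:N}\big]$$ subject to $x_{t:N+1}=\mathcal{A}x_t+\mathcal{B}u^a_{t:N}+\mathcal{D}w_{t:N}$, $u^a_{t:N}=\mathcal{S}\eta_t+\mathcal{S}\Theta_t\varphi(w_{t:N-1})$, and $u_s\in\mathbb{U}$ for all $s$, is convex and feasible, and it can be rewritten as the following tractable program with tightened constraints: $$\min_{\eta_t,\Theta_t}\ 2\,\mathrm{tr}\big(\Theta_t^\top\mu_{\mathcal{S}}^\top\mathcal{B}^\top\mathcal{Q}\mathcal{D}\Sigma'_{\varphi}\big)+2x_t^\top\mathcal{A}^\top\mathcal{Q}\mathcal{B}\mu_{\mathcal{S}}\eta_t+\mathrm{tr}\big(\eta_t^\top\Sigma_{\mathcal{S}}\eta_t\big)+\mathrm{tr}\big(\Theta_t^\top\Sigma_{\mathcal{S}}\Theta_t\Sigma_{\varphi}\big)+c_t$$ subject to: $\Theta_t$ has the strictly lower block triangular structure described in the context, and $|\eta_t^{(i)}|+\|\Theta_t^{(i)}\|_1\varphi_{\max}\le U_{\max}$ for all $i=1,\ldots,Nm$, where $\eta_t^{(i)}$ is the $i$-th component of $\eta_t$ and $\Theta_t^{(i)}$ the $i$-th row of $\Theta_t$.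
   Context: System: $x_{t+1}=Ax_t+Bu^a_t+w_t$, $x_0=\bar x\in\mathbb{R}^d$, with $A\in\mathbb{R}^{d\times d}$, $B\in\mathbb{R}^{m\times m}$-compatible matrix $B\in\mathbb{R}^{d\times m}$. $(w_t)_{t\in\mathbb{N}}$ is an i.i.d. sequence of zero-mean $\mathbb{R}^d$-valued random vectors with bounded fourth moments, each component of $w_t$ symmetrically distributed about the origin. The state is measured perfectly at every time and the sensor-to-controller channel is noiseless. Controls must lie in $\mathbb{U}=\{v\in\mathbb{R}^m:\|v\|_\infty\le U_{\max}\}$, $U_{\max}>0$. The computed control $u_t$ is sent over an erasure channel to the actuator; $(\nu_t)_{t\in\mathbb{N}}$ is an i.i.d. Bernoulli $\{0,1\}$ sequence with $\mathbb{E}[\nu_t]=p\in\,]0,1]$, independent of $(w_t)$; $\nu_t=1$ means successful transmission and $\nu_t=0$ a dropout. Acknowledgements are available to the controller, so $w_t=x_{t+1}-Ax_t-Bu^a_t$ is known to the controller at time $t+1$. $u^a_t$ denotes the control actually applied at the actuator. Notation: for a sequence $(s_n)$, $s_{n:k}=(s_n^\top,\ldots,s_{n+k-1}^\top)^\top$. Fix a horizon $N\in\mathbb{N}$ and an integer $\kappa\in\{1,\ldots,N\}$ (the recalculation interval). $Q,Q_f\in\mathbb{R}^{d\times d}$ are symmetric positive semidefinite and $R\in\mathbb{R}^{m\times m}$ symmetric positive definite; $\mathcal{Q}=\mathrm{blkdiag}(Q,\ldots,Q,Q_f)$ ($N$ copies of $Q$), $\mathcal{R}=\mathrm{blkdiag}(R,\ldots,R)$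 ($N$ copies). $\mathcal{A}=(I_d;A;\ldots;A^N)\in\mathbb{R}^{(N+1)d\times d}$; $\mathcal{B}\in\mathbb{R}^{(N+1)d\times Nm}$ has block $(i,j)$ ($i=0,\ldots,N$, $j=1,\ldots,N$) equal to $A^{i-j}B$ if $i\ge j$ and $0$ otherwise; $\mathcal{D}\in\mathbb{R}^{(N+1)d\times Nd}$ has block $(i,j)$ equal to $A^{i-j}$ if $i\ge j$ and $0$ otherwise. Policy class: $u_{t:N}=\eta_t+\Theta_t\varphi(w_{t:N-1})$, i.e. $u_{t+\ell}=\eta_{t+\ell}+\sum_{i=0}^{\ell-1}\theta_{\ell,t+i}\varphi_{i+1}(w_{t+i})$, $\ell=0,\ldots,N-1$, where $\eta_t=(\eta_t^\top,\ldots,\eta_{t+N-1}^\top)^\top\in\mathbb{R}^{Nm}$, $\varphi(w_{t:N-1})=(\varphi_1(w_t)^\top,\ldots,\varphi_{N-1}(w_{t+N-2})^\top)^\top$ with each $\varphi_i:\mathbb{R}^d\to\mathbb{R}^d$ a measurable saturation-type map symmetric about the origin with $\mathbb{E}[\varphi_i(w_{t+i-1})]=0$ and $\|\varphi(w_{t:N-1})\|_\infty\le\varphi_{\max}$; $\Theta_t\in\mathbb{R}^{Nm\times(N-1)d}$ is strictly lower block triangular: its block row $\ell$ ($\ell=0,\ldots,N-1$) is $(\theta_{\ell,t},\ldots,\theta_{\ell,t+\ell-1},0,\ldots,0)$ with $\theta_{\ell,s}\in\mathbb{R}^{m\times d}$ (block row $0$ is zero). Protocol TP1 (sequential transmission):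 the control value $u_s$ is transmitted at every step; if lost, zero control is applied. Hence $u^a_{t:N}=\mathcal{S}\eta_t+\mathcal{S}\Theta_t\varphi(w_{t:N-1})$ with $\mathcal{S}=\mathrm{blkdiag}(\nu_tI_m,\ldots,\nu_{t+\kappa-1}I_m,I_{m(N-\kappa)})$. Quantities: $\Sigma_\varphi=\mathbb{E}[\varphi(w_{t:N-1})\varphi(w_{t:N-1})^\top]$, $\Sigma'_\varphi=\mathbb{E}[w_{t:N}\varphi(w_{t:N-1})^\top]$, $\Sigma_W=\mathbb{E}[w_{t:N}w_{t:N}^\top]$, $\mu_{\mathcal{S}}=\mathbb{E}[\mathcal{S}]$, $\Sigma_{\mathcal{S}}=\mathbb{E}[\mathcal{S}^\top(\mathcal{B}^\top\mathcal{Q}\mathcal{B}+\mathcal{R})\mathcal{S}]$, $c_t=x_t^\top\mathcal{A}^\top\mathcal{Q}\mathcal{A}x_t+\mathrm{tr}(\mathcal{D}^\top\mathcal{Q}\mathcal{D}\Sigma_W)$. $\mathbb{E}_{x_t}$ denotes expectation conditional on $x_t$. *)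

theory Defs
  imports "HOL-Probability.Probability" "Jordan_Normal_Form.Matrix"
begin

text \<open>Dimensions: d = state dimension, m = input dimension, N = horizon,
  kappa = recalculation interval.  Stacked vectors/block matrices are Jordan_Normal_Form
  vectors/matrices whose entries are laid out block by block (block k of a stacked vector
  with blocks of size n occupies entries k*n .. k*n+n-1).  Noise samples w s omega are
  functions nat => real of which only the components 0..d-1 are relevant.\<close>

definition mtrace :: "real mat \<Rightarrow> real" where
  "mtrace X = (\<Sum>i<dim_row X. X $$ (i,i))"

definition outer :: "real Matrix.vec \<Rightarrow> real Matrix.vec \<Rightarrow> real mat" where
  "outer v u = Matrix.mat (dim_vec v) (dim_vec u) (\<lambda>(i,j). v $ i * u $ j)"

definition mat_expect :: "'w measure \<Rightarrow> nat \<Rightarrow> nat \<Rightarrow> ('w \<Rightarrow> real mat) \<Rightarrow> real mat" where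
  "mat_expect M nr nc F = Matrix.mat nr nc (\<lambda>(i,j). \<integral>\<omega>. F \<omega> $$ (i,j) \<partial>M)"

definition calA :: "nat \<Rightarrow> nat \<Rightarrow> real mat \<Rightarrow> real mat" where
  "calA d N A = Matrix.mat (Suc N * d) d (\<lambda>(i,j). (A ^\<^sub>m (i div d)) $$ (i mod d, j))"

text \<open>calB: block (i,j), i = 0..N, j = 1..N, equals A^(i-j) B if i >= j, else 0.
  Column block with 0-based index jb corresponds to j = jb + 1.\<close>
definition calB :: "nat \<Rightarrow> nat \<Rightarrow> nat \<Rightarrow> real mat \<Rightarrow> real mat \<Rightarrow> real mat" where
  "calB d m N A B = Matrix.mat (Suc N * d) (N * m) (\<lambda>(i,j).
     if j div m < i div d then (A ^\<^sub>m (i div d - j div m - 1) * B) $$ (i mod d, j mod m) else 0)"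

definition calD :: "nat \<Rightarrow> nat \<Rightarrow> real mat \<Rightarrow> real mat" where
  "calD d N A = Matrix.mat (Suc N * d) (N * d) (\<lambda>(i,j).
     if j div d < i div d then (A ^\<^sub>m (i div d - j div d - 1)) $$ (i mod d, j mod d) else 0)"

definition calQ :: "nat \<Rightarrow> nat \<Rightarrow> real mat \<Rightarrow> real mat \<Rightarrow> real mat" where
  "calQ d N Q Qf = Matrix.mat (Suc N * d) (Suc N * d) (\<lambda>(i,j).
     if i div d = j div d then (if i div d < N then Q else Qf) $$ (i mod d, j mod d) else 0)"

definition calR :: "nat \<Rightarrow> nat \<Rightarrow> real mat \<Rightarrow> real mat" where
  "calR m N R = Matrix.mat (N * m) (N * m) (\<lambda>(i,j).
     if i div m = j div m then R $$ (i mod m, j mod m) else 0)"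

definition Smat :: "nat \<Rightarrow> nat \<Rightarrow> nat \<Rightarrow> (nat \<Rightarrow> 'w \<Rightarrow> real) \<Rightarrow> nat \<Rightarrow> 'w \<Rightarrow> real mat" where
  "Smat m N \<kappa> \<nu> t \<omega> = Matrix.mat (N * m) (N * m) (\<lambda>(i,j).
     if i = j then (if i div m < \<kappa> then \<nu> (t + i div m) \<omega> else 1) else 0)"

definition Wstack :: "nat \<Rightarrow> nat \<Rightarrow> (nat \<Rightarrow> 'w \<Rightarrow> nat \<Rightarrow> real) \<Rightarrow> nat \<Rightarrow> 'w \<Rightarrow> real Matrix.vec" where
  "Wstack d N w t \<omega> = Matrix.vec (N * d) (\<lambda>k. w (t + k div d) \<omega> (k mod d))"

definition Phistack :: "nat \<Rightarrow> nat \<Rightarrow> (nat \<Rightarrow> (nat \<Rightarrow> real) \<Rightarrow> nat \<Rightarrow> real)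
    \<Rightarrow> (nat \<Rightarrow> 'w \<Rightarrow> nat \<Rightarrow> real) \<Rightarrow> nat \<Rightarrow> 'w \<Rightarrow> real Matrix.vec" where
  "Phistack d N \<phi> w t \<omega> = Matrix.vec ((N - 1) * d)
     (\<lambda>k. \<phi> (Suc (k div d)) (restrict (w (t + k div d) \<omega>) {..<d}) (k mod d))"

definition strict_lower_block :: "nat \<Rightarrow> nat \<Rightarrow> nat \<Rightarrow> real mat \<Rightarrow> bool" where
  "strict_lower_block d m N \<Theta> \<longleftrightarrow>
     (\<forall>i < N * m. \<forall>j < (N - 1) * d. \<not> (j div d < i div m) \<longrightarrow> \<Theta> $$ (i,j) = 0)"

definition ctrl where
  "ctrl d N \<phi> w t \<eta> \<Theta> \<omega> = \<eta> + mult_mat_vec \<Theta> (Phistack d N \<phi> w t \<omega>)"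

definition ctrl_applied where
  "ctrl_applied d m N \<kappa> \<phi> w \<nu> t \<eta> \<Theta> \<omega> =
     mult_mat_vec (Smat m N \<kappa> \<nu> t \<omega>) (ctrl d N \<phi> w t \<eta> \<Theta> \<omega>)"

definition state_stack where
  "state_stack d m N \<kappa> A B \<phi> w \<nu> t x \<eta> \<Theta> \<omega> =
     mult_mat_vec (calA d N A) x
     + mult_mat_vec (calB d m N A B) (ctrl_applied d m N \<kappa> \<phi> w \<nu> t \<eta> \<Theta> \<omega>)
     + mult_mat_vec (calD d N A) (Wstack d N w t \<omega>)"

definition stage_cost where
  "stage_cost d m N \<kappa> A B Q Qf R \<phi> w \<nu> t x \<eta> \<Theta> \<omega> =
     (let xs = state_stack d m N \<kappa> A B \<phi> w \<nu> t x \<eta> \<Theta> \<omega>;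
          ua = ctrl_applied d m N \<kappa> \<phi> w \<nu> t \<eta> \<Theta> \<omega>
      in scalar_prod xs (mult_mat_vec (calQ d N Q Qf) xs)
         + scalar_prod ua (mult_mat_vec (calR m N R) ua))"

definition feasible_set where
  "feasible_set M d m N Umax \<phi> w t =
     {(\<eta>, \<Theta>). \<eta> \<in> carrier_vec (N * m) \<and> \<Theta> \<in> carrier_mat (N * m) ((N - 1) * d)
        \<and> strict_lower_block d m N \<Theta>
        \<and> (AE \<omega> in M. \<forall>i < N * m. \<bar>ctrl d N \<phi> w t \<eta> \<Theta> \<omega> $ i\<bar> \<le> Umax)}"

definition comb :: "real \<Rightarrow> real Matrix.vec \<times> real mat \<Rightarrow> real Matrix.vec \<times> real mat
    \<Rightarrow> real Matrix.vec \<times> real mat" where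
  "comb l a b = (smult_vec l (fst a) + smult_vec (1 - l) (fst b),
                 smult_mat l (snd a) + smult_mat (1 - l) (snd b))"

definition convex_problem where
  "convex_problem F J \<longleftrightarrow>
     (\<forall>a \<in> F. \<forall>b \<in> F. \<forall>l::real. 0 \<le> l \<and> l \<le> 1 \<longrightarrow>
        comb l a b \<in> F \<and> J (comb l a b) \<le> l * J a + (1 - l) * J b)"

definition tractable_obj where
  "tractable_obj M d m N \<kappa> A B Q Qf R \<phi> w \<nu> t x \<eta> \<Theta> =
    (let cA = calA d N A; cB = calB d m N A B; cD = calD d N A; cQ = calQ d N Q Qf;
         cR = calR m N R;
         muS = mat_expect M (N * m) (N * m) (Smat m N \<kappa> \<nu> t);
         SigS = mat_expect M (N * m) (N * m)
                  (\<lambda>\<omega>. (Smat m N \<kappa> \<nu> t \<omega>)\<^sup>T * (cB\<^sup>T * cQ * cB + cR) * Smat m N \<kappa> \<nu> t \<omega>);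
         SigPhi = mat_expect M ((N - 1) * d) ((N - 1) * d)
                  (\<lambda>\<omega>. outer (Phistack d N \<phi> w t \<omega>) (Phistack d N \<phi> w t \<omega>));
         SigPhi' = mat_expect M (N * d) ((N - 1) * d)
                  (\<lambda>\<omega>. outer (Wstack d N w t \<omega>) (Phistack d N \<phi> w t \<omega>));
         SigW = mat_expect M (N * d) (N * d)
                  (\<lambda>\<omega>. outer (Wstack d N w t \<omega>) (Wstack d N w t \<omega>));
         c = scalar_prod x (mult_mat_vec (cA\<^sup>T * cQ * cA) x) + mtrace (cD\<^sup>T * cQ * cD * SigW)
     in 2 * mtrace (\<Theta>\<^sup>T * muS\<^sup>T * cB\<^sup>T * cQ * cD * SigPhi')
        + 2 * scalar_prod x (mult_mat_vec (cA\<^sup>T * cQ * cB * muS) \<eta>)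
        + scalar_prod \<eta> (mult_mat_vec SigS \<eta>)
        + mtrace (\<Theta>\<^sup>T * SigS * \<Theta> * SigPhi)
        + c)"

definition tightened where
  "tightened d m N Umax \<phi>max \<eta> \<Theta> \<longleftrightarrow>
     (\<forall>i < N * m. \<bar>\<eta> $ i\<bar> + (\<Sum>j < (N - 1) * d. \<bar>\<Theta> $$ (i,j)\<bar>) * \<phi>max \<le> Umax)"

end

theory Submission
  imports Defs
begin



lemma L_gen: fixes Q X Y c :: "nat \<Rightarrow> nat \<Rightarrow> real"
  assumes "finite A" "finite B" "finite I" "finite J"
  shows "(\<Sum>a\<in>A. \<Sum>b\<in>B. Q a b * (\<Sum>i\<in>I. \<Sum>j\<in>J. (X a i * Y b j) * c i j))
   = (\<Sum>i\<in>I. \<Sum>j\<in>J. (\<Sum>a\<in>A. \<Sum>b\<in>B. X a i * Q a b * Y b j) * c i j)"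
proof -
  have "(\<Sum>a\<in>A. \<Sum>b\<in>B. Q a b * (\<Sum>i\<in>I. \<Sum>j\<in>J. (X a i * Y b j) * c i j))
     = (\<Sum>a\<in>A. \<Sum>b\<in>B. \<Sum>i\<in>I. \<Sum>j\<in>J. X a i * Q a b * Y b j * c i j)"
    by (simp add: sum_distrib_left mult_ac)
  also have "\<dots> = (\<Sum>a\<in>A. \<Sum>i\<in>I. \<Sum>b\<in>B. \<Sum>j\<in>J. X a i * Q a b * Y b j * c i j)"
    by (rule sum.cong[OF refl], rule sum.swap)
  also have "\<dots> = (\<Sum>i\<in>I. \<Sum>a\<in>A. \<Sum>b\<in>B. \<Sum>j\<in>J. X a i * Q a b * Y b j * c i j)"
    by (rule sum.swap)
  also have "\<dots> = (\<Sum>i\<in>I. \<Sum>a\<in>A. \<Sum>j\<in>J. \<Sum>b\<in>B. X a i * Q a b * Y b j * c i j)"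
    by (rule sum.cong[OF refl], rule sum.cong[OF refl], rule sum.swap)
  also have "\<dots> = (\<Sum>i\<in>I. \<Sum>j\<in>J. \<Sum>a\<in>A. \<Sum>b\<in>B. X a i * Q a b * Y b j * c i j)"
    by (rule sum.cong[OF refl], rule sum.swap)
  also have "\<dots> = (\<Sum>i\<in>I. \<Sum>j\<in>J. (\<Sum>a\<in>A. \<Sum>b\<in>B. X a i * Q a b * Y b j) * c i j)"
    by (simp add: sum_distrib_right)
  finally show ?thesis .
qed

lemma L_prod: fixes Q X Y :: "nat \<Rightarrow> nat \<Rightarrow> real"
  assumes "finite A" "finite B" "finite I" "finite J"
  shows "(\<Sum>a\<in>A. \<Sum>b\<in>B. Q a b * ((\<Sum>i\<in>I. X a i * f i) * (\<Sum>j\<in>J. Y b j * g j)))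
   = (\<Sum>i\<in>I. \<Sum>j\<in>J. (\<Sum>a\<in>A. \<Sum>b\<in>B. X a i * Q a b * Y b j) * (f i * g j))"
proof -
  have "(\<Sum>a\<in>A. \<Sum>b\<in>B. Q a b * ((\<Sum>i\<in>I. X a i * f i) * (\<Sum>j\<in>J. Y b j * g j)))
     = (\<Sum>a\<in>A. \<Sum>b\<in>B. Q a b * (\<Sum>i\<in>I. \<Sum>j\<in>J. (X a i * Y b j) * (f i * g j)))"
    by (simp add: sum_product mult_ac)
  then show ?thesis using L_gen[OF assms, of Q X Y "\<lambda>i j. f i * g j"] by simp
qed

lemma mv_idx': "i < dim_row A \<Longrightarrow> dim_vec v = dim_col A \<Longrightarrow> (A *\<^sub>v v) $ i = (\<Sum>j<dim_col A. A $$ (i,j) * v $ j)"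
  by (simp add: scalar_prod_def atLeast0LessThan)

lemma mm_idx: "i < dim_row A \<Longrightarrow> j < dim_col B \<Longrightarrow> dim_col A = dim_row B \<Longrightarrow>
   (A * B) $$ (i,j) = (\<Sum>k<dim_col A. A $$ (i,k) * B $$ (k,j))"
  by (simp add: scalar_prod_def atLeast0LessThan)

lemma trip: fixes X :: "real mat" assumes "X \<in> carrier_mat nb n1" "Q \<in> carrier_mat nb nb" "Y \<in> carrier_mat nb n2" "i < n1" "j < n2"
  shows "(X\<^sup>T * Q * Y) $$ (i,j) = (\<Sum>a<nb. \<Sum>b<nb. X $$ (a,i) * Q $$ (a,b) * Y $$ (b,j))"
proof -
  have "(X\<^sup>T * Q * Y) $$ (i,j) = (\<Sum>b<nb. (X\<^sup>T * Q) $$ (i,b) * Y $$ (b,j))"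
    using assms by (subst mm_idx) auto
  also have "\<dots> = (\<Sum>b<nb. (\<Sum>a<nb. X $$ (a,i) * Q $$ (a,b)) * Y $$ (b,j))"
    using assms by (intro sum.cong refl) (subst mm_idx, auto)
  also have "\<dots> = (\<Sum>b<nb. \<Sum>a<nb. X $$ (a,i) * Q $$ (a,b) * Y $$ (b,j))"
    by (simp add: sum_distrib_right)
  also have "\<dots> = (\<Sum>a<nb. \<Sum>b<nb. X $$ (a,i) * Q $$ (a,b) * Y $$ (b,j))"
    by (rule sum.swap)
  finally show ?thesis .
qed

lemma mtr: fixes X :: "real mat" assumes "X \<in> carrier_mat n1 n2" "Y \<in> carrier_mat n2 n1"
  shows "mtrace (X * Y) = (\<Sum>i<n1. \<Sum>k<n2. X $$ (i,k) * Y $$ (k,i))"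
proof -
  have "mtrace (X * Y) = (\<Sum>i<n1. (X * Y) $$ (i,i))" unfolding mtrace_def using assms by simp
  also have "\<dots> = (\<Sum>i<n1. \<Sum>k<n2. X $$ (i,k) * Y $$ (k,i))"
    using assms by (intro sum.cong refl) (subst mm_idx, auto)
  finally show ?thesis .
qed

lemma sp_mv: fixes G :: "real mat" assumes "x \<in> carrier_vec n1" "G \<in> carrier_mat n1 n2" "y \<in> carrier_vec n2"
  shows "x \<bullet> (G *\<^sub>v y) = (\<Sum>i<n1. \<Sum>j<n2. G $$ (i,j) * (x $ i * y $ j))"
proof -
  have "x \<bullet> (G *\<^sub>v y) = (\<Sum>i<n1. x $ i * (G *\<^sub>v y) $ i)"
    unfolding scalar_prod_def using assms by (simp add: atLeast0LessThan)
  also have "\<dots> = (\<Sum>i<n1. x $ i * (\<Sum>j<n2. G $$ (i,j) * y $ j))"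
    using assms by (intro sum.cong refl) (subst mv_idx', auto)
  also have "\<dots> = (\<Sum>i<n1. \<Sum>j<n2. G $$ (i,j) * (x $ i * y $ j))"
    by (simp add: sum_distrib_left mult.left_commute)
  finally show ?thesis .
qed


lemma Ta: fixes cA cQ :: "real mat"
  assumes A: "cA \<in> carrier_mat nb d" and Q: "cQ \<in> carrier_mat nb nb" and x: "x \<in> carrier_vec d"
  shows "(\<Sum>a<nb. \<Sum>b<nb. cQ $$ (a,b) * ((cA *\<^sub>v x) $ a * (cA *\<^sub>v x) $ b)) = x \<bullet> ((cA\<^sup>T * cQ * cA) *\<^sub>v x)"
proof -
  have e: "\<And>a. a < nb \<Longrightarrow> (cA *\<^sub>v x) $ a = (\<Sum>p<d. cA $$ (a,p) * x $ p)"
    using A x by (subst mv_idx') auto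
  have "(\<Sum>a<nb. \<Sum>b<nb. cQ $$ (a,b) * ((cA *\<^sub>v x) $ a * (cA *\<^sub>v x) $ b))
     = (\<Sum>a<nb. \<Sum>b<nb. cQ $$ (a,b) * ((\<Sum>p<d. cA $$ (a,p) * x $ p) * (\<Sum>p<d. cA $$ (b,p) * x $ p)))"
    by (intro sum.cong refl) (simp add: e)
  also have "\<dots> = (\<Sum>i<d. \<Sum>j<d. (\<Sum>a<nb. \<Sum>b<nb. cA $$ (a,i) * cQ $$ (a,b) * cA $$ (b,j)) * (x $ i * x $ j))"
    by (rule L_prod) auto
  also have "\<dots> = (\<Sum>i<d. \<Sum>j<d. (cA\<^sup>T * cQ * cA) $$ (i,j) * (x $ i * x $ j))"
    by (intro sum.cong refl) (simp add: trip[OF A Q A])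
  also have "\<dots> = x \<bullet> ((cA\<^sup>T * cQ * cA) *\<^sub>v x)"
    by (rule sp_mv[symmetric]) (use A Q x in auto)
  finally show ?thesis .
qed

lemma Tb: fixes cA cQ cB muS :: "real mat"
  assumes A: "cA \<in> carrier_mat nb d" and Q: "cQ \<in> carrier_mat nb nb" and x: "x \<in> carrier_vec d"
    and B: "cB \<in> carrier_mat nb n" and mu: "muS \<in> carrier_mat n n"
    and mue: "\<And>i j. i < n \<Longrightarrow> j < n \<Longrightarrow> muS $$ (i,j) = (if i = j then Ms i else 0)"
    and eta: "\<eta> \<in> carrier_vec n"
  shows "(\<Sum>a<nb. \<Sum>b<nb. cQ $$ (a,b) * ((cA *\<^sub>v x) $ a * (\<Sum>i<n. cB $$ (b,i) * (Ms i * \<eta> $ i))))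
     = x \<bullet> ((cA\<^sup>T * cQ * cB * muS) *\<^sub>v \<eta>)"
proof -
  have e: "\<And>a. a < nb \<Longrightarrow> (cA *\<^sub>v x) $ a = (\<Sum>p<d. cA $$ (a,p) * x $ p)"
    using A x by (subst mv_idx') auto
  have m: "\<And>p i. p < d \<Longrightarrow> i < n \<Longrightarrow> (cA\<^sup>T * cQ * cB * muS) $$ (p,i) = (cA\<^sup>T * cQ * cB) $$ (p,i) * Ms i"
  proof -
    fix p i assume p: "p < d" and i: "i < n"
    have "(cA\<^sup>T * cQ * cB * muS) $$ (p,i) = (\<Sum>k<n. (cA\<^sup>T * cQ * cB) $$ (p,k) * muS $$ (k,i))"
      using A Q B mu p i by (subst mm_idx) auto
    also have "\<dots> = (\<Sum>k<n. if k = i then (cA\<^sup>T * cQ * cB) $$ (p,i) * Ms i else 0)"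
      by (intro sum.cong refl) (use i in \<open>auto simp: mue\<close>)
    finally show "(cA\<^sup>T * cQ * cB * muS) $$ (p,i) = (cA\<^sup>T * cQ * cB) $$ (p,i) * Ms i" using i by simp
  qed
  have "(\<Sum>a<nb. \<Sum>b<nb. cQ $$ (a,b) * ((cA *\<^sub>v x) $ a * (\<Sum>i<n. cB $$ (b,i) * (Ms i * \<eta> $ i))))
     = (\<Sum>a<nb. \<Sum>b<nb. cQ $$ (a,b) * ((\<Sum>p<d. cA $$ (a,p) * x $ p) * (\<Sum>i<n. cB $$ (b,i) * (Ms i * \<eta> $ i))))"
    by (intro sum.cong refl) (simp add: e)
  also have "\<dots> = (\<Sum>p<d. \<Sum>i<n. (\<Sum>a<nb. \<Sum>b<nb. cA $$ (a,p) * cQ $$ (a,b) * cB $$ (b,i)) * (x $ p * (Ms i * \<eta> $ i)))"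
    by (rule L_prod) auto
  also have "\<dots> = (\<Sum>p<d. \<Sum>i<n. (cA\<^sup>T * cQ * cB * muS) $$ (p,i) * (x $ p * \<eta> $ i))"
    by (intro sum.cong refl) (simp add: m trip[OF A Q B] mult_ac)
  also have "\<dots> = x \<bullet> ((cA\<^sup>T * cQ * cB * muS) *\<^sub>v \<eta>)"
    by (rule sp_mv[symmetric]) (use A Q x B mu eta in auto)
  finally show ?thesis .
qed

lemma Te: fixes cD cQ SW :: "real mat"
  assumes D: "cD \<in> carrier_mat nb r" and Q: "cQ \<in> carrier_mat nb nb" and SW: "SW \<in> carrier_mat r r"
    and swe: "\<And>i j. i < r \<Longrightarrow> j < r \<Longrightarrow> SW $$ (i,j) = E i j"
    and sym: "\<And>i j. E i j = E j i"
  shows "(\<Sum>a<nb. \<Sum>b<nb. cQ $$ (a,b) * (\<Sum>i<r. \<Sum>j<r. (cD $$ (a,i) * cD $$ (b,j)) * E i j))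
     = mtrace (cD\<^sup>T * cQ * cD * SW)"
proof -
  have "(\<Sum>a<nb. \<Sum>b<nb. cQ $$ (a,b) * (\<Sum>i<r. \<Sum>j<r. (cD $$ (a,i) * cD $$ (b,j)) * E i j))
     = (\<Sum>i<r. \<Sum>j<r. (\<Sum>a<nb. \<Sum>b<nb. cD $$ (a,i) * cQ $$ (a,b) * cD $$ (b,j)) * E i j)"
    by (rule L_gen) auto
  also have "\<dots> = (\<Sum>i<r. \<Sum>j<r. (cD\<^sup>T * cQ * cD) $$ (i,j) * SW $$ (j,i))"
    by (intro sum.cong refl) (simp add: trip[OF D Q D] swe sym)
  also have "\<dots> = mtrace (cD\<^sup>T * cQ * cD * SW)"
    by (rule mtr[symmetric]) (use D Q SW in auto)
  finally show ?thesis .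
qed

lemma Tc: fixes cB cQ cR SS SP \<Theta> :: "real mat"
  assumes B: "cB \<in> carrier_mat nb n" and Q: "cQ \<in> carrier_mat nb nb" and R: "cR \<in> carrier_mat n n"
    and SS: "SS \<in> carrier_mat n n" and SP: "SP \<in> carrier_mat q q" and Th: "\<Theta> \<in> carrier_mat n q"
    and eta: "\<eta> \<in> carrier_vec n"
    and sse: "\<And>i j. i < n \<Longrightarrow> j < n \<Longrightarrow> SS $$ (i,j) = ((cB\<^sup>T * cQ * cB) $$ (i,j) + cR $$ (i,j)) * Mss i j"
    and spe: "\<And>k l. k < q \<Longrightarrow> l < q \<Longrightarrow> SP $$ (k,l) = E k l"
    and sym: "\<And>k l. E k l = E l k"
  shows "(\<Sum>a<nb. \<Sum>b<nb. cQ $$ (a,b) * (\<Sum>i<n. \<Sum>j<n. (cB $$ (a,i) * cB $$ (b,j)) *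
            (Mss i j * (\<eta> $ i * \<eta> $ j + (\<Sum>k<q. \<Sum>l<q. \<Theta> $$ (i,k) * \<Theta> $$ (j,l) * E k l)))))
       + (\<Sum>i<n. \<Sum>j<n. cR $$ (i,j) * (Mss i j * (\<eta> $ i * \<eta> $ j + (\<Sum>k<q. \<Sum>l<q. \<Theta> $$ (i,k) * \<Theta> $$ (j,l) * E k l))))
     = \<eta> \<bullet> (SS *\<^sub>v \<eta>) + mtrace (\<Theta>\<^sup>T * SS * \<Theta> * SP)"
proof -
  let ?U = "\<lambda>i j. \<eta> $ i * \<eta> $ j + (\<Sum>k<q. \<Sum>l<q. \<Theta> $$ (i,k) * \<Theta> $$ (j,l) * E k l)"
  have "(\<Sum>a<nb. \<Sum>b<nb. cQ $$ (a,b) * (\<Sum>i<n. \<Sum>j<n. (cB $$ (a,i) * cB $$ (b,j)) * (Mss i j * ?U i j)))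
     = (\<Sum>i<n. \<Sum>j<n. (\<Sum>a<nb. \<Sum>b<nb. cB $$ (a,i) * cQ $$ (a,b) * cB $$ (b,j)) * (Mss i j * ?U i j))"
    by (rule L_gen) auto
  also have "\<dots> = (\<Sum>i<n. \<Sum>j<n. (cB\<^sup>T * cQ * cB) $$ (i,j) * (Mss i j * ?U i j))"
    by (intro sum.cong refl) (simp add: trip[OF B Q B])
  finally have 1: "(\<Sum>a<nb. \<Sum>b<nb. cQ $$ (a,b) * (\<Sum>i<n. \<Sum>j<n. (cB $$ (a,i) * cB $$ (b,j)) * (Mss i j * ?U i j)))
        + (\<Sum>i<n. \<Sum>j<n. cR $$ (i,j) * (Mss i j * ?U i j))
     = (\<Sum>i<n. \<Sum>j<n. SS $$ (i,j) * ?U i j)"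
    by (simp add: sse sum.distrib[symmetric] algebra_simps)
  have 2: "(\<Sum>i<n. \<Sum>j<n. SS $$ (i,j) * ?U i j) = (\<Sum>i<n. \<Sum>j<n. SS $$ (i,j) * (\<eta> $ i * \<eta> $ j))
     + (\<Sum>i<n. \<Sum>j<n. SS $$ (i,j) * (\<Sum>k<q. \<Sum>l<q. (\<Theta> $$ (i,k) * \<Theta> $$ (j,l)) * E k l))"
    by (simp add: sum.distrib[symmetric] algebra_simps)
  have 3: "(\<Sum>i<n. \<Sum>j<n. SS $$ (i,j) * (\<eta> $ i * \<eta> $ j)) = \<eta> \<bullet> (SS *\<^sub>v \<eta>)"
    by (rule sp_mv[symmetric]) (use SS eta in auto)
  have "(\<Sum>i<n. \<Sum>j<n. SS $$ (i,j) * (\<Sum>k<q. \<Sum>l<q. (\<Theta> $$ (i,k) * \<Theta> $$ (j,l)) * E k l))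
     = (\<Sum>k<q. \<Sum>l<q. (\<Sum>i<n. \<Sum>j<n. \<Theta> $$ (i,k) * SS $$ (i,j) * \<Theta> $$ (j,l)) * E k l)"
    by (rule L_gen) auto
  also have "\<dots> = (\<Sum>k<q. \<Sum>l<q. (\<Theta>\<^sup>T * SS * \<Theta>) $$ (k,l) * SP $$ (l,k))"
    by (intro sum.cong refl) (simp add: trip[OF Th SS Th] spe sym)
  also have "\<dots> = mtrace (\<Theta>\<^sup>T * SS * \<Theta> * SP)"
    by (rule mtr[symmetric]) (use Th SS SP in auto)
  finally have 4: "(\<Sum>i<n. \<Sum>j<n. SS $$ (i,j) * (\<Sum>k<q. \<Sum>l<q. (\<Theta> $$ (i,k) * \<Theta> $$ (j,l)) * E k l))
     = mtrace (\<Theta>\<^sup>T * SS * \<Theta> * SP)" .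
  show ?thesis using 1 2 3 4 by (simp add: mult_ac)
qed

lemma Td: fixes cB cQ cD muS SP' \<Theta> :: "real mat"
  assumes B: "cB \<in> carrier_mat nb n" and Q: "cQ \<in> carrier_mat nb nb" and D: "cD \<in> carrier_mat nb r"
    and mu: "muS \<in> carrier_mat n n" and SP: "SP' \<in> carrier_mat r q" and Th: "\<Theta> \<in> carrier_mat n q"
    and mue: "\<And>i j. i < n \<Longrightarrow> j < n \<Longrightarrow> muS $$ (i,j) = (if i = j then Ms i else 0)"
    and spe: "\<And>j l. j < r \<Longrightarrow> l < q \<Longrightarrow> SP' $$ (j,l) = E j l"
  shows "(\<Sum>a<nb. \<Sum>b<nb. cQ $$ (a,b) * (\<Sum>i<n. \<Sum>j<r. (cB $$ (a,i) * cD $$ (b,j)) *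
            (Ms i * (\<Sum>k<q. \<Theta> $$ (i,k) * E j k))))
     = mtrace (\<Theta>\<^sup>T * muS\<^sup>T * cB\<^sup>T * cQ * cD * SP')"
proof -
  let ?T = "cB\<^sup>T * cQ * cD"
  have T: "?T \<in> carrier_mat n r" using B Q D by auto
  have "(\<Sum>a<nb. \<Sum>b<nb. cQ $$ (a,b) * (\<Sum>i<n. \<Sum>j<r. (cB $$ (a,i) * cD $$ (b,j)) *
            (Ms i * (\<Sum>k<q. \<Theta> $$ (i,k) * E j k))))
     = (\<Sum>i<n. \<Sum>j<r. (\<Sum>a<nb. \<Sum>b<nb. cB $$ (a,i) * cQ $$ (a,b) * cD $$ (b,j)) * (Ms i * (\<Sum>k<q. \<Theta> $$ (i,k) * E j k)))"
    by (rule L_gen) auto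
  also have "\<dots> = (\<Sum>i<n. \<Sum>j<r. ?T $$ (i,j) * (Ms i * (\<Sum>k<q. \<Theta> $$ (i,k) * E j k)))"
    by (intro sum.cong refl) (subst trip[OF B Q D], auto)
  also have "\<dots> = (\<Sum>i<n. \<Sum>j<r. \<Sum>k<q. \<Theta> $$ (i,k) * (Ms i * ?T $$ (i,j) * E j k))"
    by (simp only: sum_distrib_left mult_ac)
  also have "\<dots> = (\<Sum>i<n. \<Sum>k<q. \<Sum>j<r. \<Theta> $$ (i,k) * (Ms i * ?T $$ (i,j) * E j k))"
    by (rule sum.cong[OF refl], rule sum.swap)
  also have "\<dots> = (\<Sum>k<q. \<Sum>i<n. \<Sum>j<r. \<Theta> $$ (i,k) * (Ms i * ?T $$ (i,j) * E j k))"
    by (rule sum.swap)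
  finally have L: "(\<Sum>a<nb. \<Sum>b<nb. cQ $$ (a,b) * (\<Sum>i<n. \<Sum>j<r. (cB $$ (a,i) * cD $$ (b,j)) *
            (Ms i * (\<Sum>k<q. \<Theta> $$ (i,k) * E j k))))
     = (\<Sum>k<q. \<Sum>i<n. \<Sum>j<r. \<Theta> $$ (i,k) * (Ms i * ?T $$ (i,j) * E j k))" .
  have assoc: "\<Theta>\<^sup>T * muS\<^sup>T * cB\<^sup>T * cQ * cD * SP' = \<Theta>\<^sup>T * ((muS\<^sup>T * ?T) * SP')"
  proof -
    have c1: "\<Theta>\<^sup>T \<in> carrier_mat q n" "muS\<^sup>T \<in> carrier_mat n n" "cB\<^sup>T \<in> carrier_mat n nb"
      using Th mu B by auto
    have e1: "\<Theta>\<^sup>T * muS\<^sup>T * cB\<^sup>T = \<Theta>\<^sup>T * (muS\<^sup>T * cB\<^sup>T)"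
      by (rule assoc_mult_mat[OF c1])
    have e2: "\<Theta>\<^sup>T * (muS\<^sup>T * cB\<^sup>T) * cQ = \<Theta>\<^sup>T * (muS\<^sup>T * cB\<^sup>T * cQ)"
      by (rule assoc_mult_mat[OF c1(1) _ Q]) (use c1 in auto)
    have e3: "\<Theta>\<^sup>T * (muS\<^sup>T * cB\<^sup>T * cQ) * cD = \<Theta>\<^sup>T * (muS\<^sup>T * cB\<^sup>T * cQ * cD)"
      by (rule assoc_mult_mat[OF c1(1) _ D]) (use c1 Q in auto)
    have e4: "muS\<^sup>T * cB\<^sup>T * cQ = muS\<^sup>T * (cB\<^sup>T * cQ)"
      by (rule assoc_mult_mat[OF c1(2) c1(3) Q])
    have e5: "muS\<^sup>T * (cB\<^sup>T * cQ) * cD = muS\<^sup>T * ?T"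
      by (rule assoc_mult_mat[OF c1(2) _ D]) (use c1 Q in auto)
    have e6: "\<Theta>\<^sup>T * (muS\<^sup>T * ?T) * SP' = \<Theta>\<^sup>T * ((muS\<^sup>T * ?T) * SP')"
      by (rule assoc_mult_mat[OF c1(1) _ SP]) (use c1 T in auto)
    show ?thesis using e1 e2 e3 e4 e5 e6 by simp
  qed
  have Z: "\<And>i l. i < n \<Longrightarrow> l < q \<Longrightarrow> ((muS\<^sup>T * ?T) * SP') $$ (i,l) = (\<Sum>j<r. Ms i * ?T $$ (i,j) * E j l)"
  proof -
    fix i l assume i: "i < n" and l: "l < q"
    have "((muS\<^sup>T * ?T) * SP') $$ (i,l) = (\<Sum>j<r. (muS\<^sup>T * ?T) $$ (i,j) * SP' $$ (j,l))"
      using mu T SP i l by (subst mm_idx) auto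
    also have "\<dots> = (\<Sum>j<r. Ms i * ?T $$ (i,j) * E j l)"
    proof (intro sum.cong refl)
      fix j assume j: "j \<in> {..<r}"
      have "(muS\<^sup>T * ?T) $$ (i,j) = (\<Sum>k<n. muS\<^sup>T $$ (i,k) * ?T $$ (k,j))"
        using mu T i j by (subst mm_idx) auto
      also have "\<dots> = (\<Sum>k<n. if k = i then Ms i * ?T $$ (i,j) else 0)"
        by (intro sum.cong refl) (use mu i in \<open>auto simp: mue\<close>)
      finally have "(muS\<^sup>T * ?T) $$ (i,j) = Ms i * ?T $$ (i,j)" using i by simp
      then show "(muS\<^sup>T * ?T) $$ (i,j) * SP' $$ (j,l) = Ms i * ?T $$ (i,j) * E j l"
        using j l by (simp add: spe)
    qed
    finally show "((muS\<^sup>T * ?T) * SP') $$ (i,l) = (\<Sum>j<r. Ms i * ?T $$ (i,j) * E j l)" .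
  qed
  have "mtrace (\<Theta>\<^sup>T * muS\<^sup>T * cB\<^sup>T * cQ * cD * SP') = mtrace (\<Theta>\<^sup>T * ((muS\<^sup>T * ?T) * SP'))"
    by (simp add: assoc)
  also have "\<dots> = (\<Sum>k<q. \<Sum>i<n. \<Theta>\<^sup>T $$ (k,i) * ((muS\<^sup>T * ?T) * SP') $$ (i,k))"
    by (rule mtr) (use Th mu T SP in auto)
  also have "\<dots> = (\<Sum>k<q. \<Sum>i<n. \<Sum>j<r. \<Theta> $$ (i,k) * (Ms i * ?T $$ (i,j) * E j k))"
    by (intro sum.cong refl) (use Th in \<open>simp add: Z sum_distrib_left\<close>)
  finally show ?thesis using L by simp
qed





definition bil :: "(nat \<Rightarrow> nat \<Rightarrow> real) \<Rightarrow> nat \<Rightarrow> (nat \<Rightarrow> real) \<Rightarrow> (nat \<Rightarrow> real) \<Rightarrow> real" where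
  "bil C n u v = (\<Sum>a<n. u a * (\<Sum>b<n. C a b * v b))"

lemma bil_left: "bil C n (\<lambda>a. s * x a + t * y a) v = s * bil C n x v + t * bil C n y v"
  unfolding bil_def by (simp add: algebra_simps sum.distrib sum_distrib_left)

lemma bil_right: "bil C n u (\<lambda>a. s * x a + t * y a) = s * bil C n u x + t * bil C n u y"
  unfolding bil_def by (simp add: algebra_simps sum.distrib sum_distrib_left)

lemma quad_convex:
  assumes psd: "\<And>v. 0 \<le> bil C n v v" and l: "0 \<le> l" "l \<le> 1"
  shows "bil C n (\<lambda>a. l * x a + (1 - l) * y a) (\<lambda>a. l * x a + (1 - l) * y a)
     \<le> l * bil C n x x + (1 - l) * bil C n y y"
proof -
  let ?z = "\<lambda>a. l * x a + (1 - l) * y a"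
  have z: "bil C n ?z ?z = l * (l * bil C n x x + (1 - l) * bil C n x y) + (1 - l) * (l * bil C n y x + (1 - l) * bil C n y y)"
    by (simp add: bil_left bil_right)
  have dd: "bil C n (\<lambda>a. 1 * x a + (- 1) * y a) (\<lambda>a. 1 * x a + (- 1) * y a)
       = bil C n x x - bil C n x y - bil C n y x + bil C n y y"
    by (simp only: bil_left bil_right) (simp add: algebra_simps)
  have "0 \<le> bil C n (\<lambda>a. 1 * x a + (- 1) * y a) (\<lambda>a. 1 * x a + (- 1) * y a)" by (rule psd)
  then have p: "0 \<le> bil C n x x - bil C n x y - bil C n y x + bil C n y y" using dd by simp
  have "0 \<le> l * (1 - l)" using l by simp
  then have "0 \<le> (l * (1 - l)) * (bil C n x x - bil C n x y - bil C n y x + bil C n y y)"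
    using p by (rule mult_nonneg_nonneg)
  moreover have "l * bil C n x x + (1 - l) * bil C n y y - bil C n ?z ?z
      = (l * (1 - l)) * (bil C n x x - bil C n x y - bil C n y x + bil C n y y)"
    unfolding z by (simp add: algebra_simps)
  ultimately show ?thesis by linarith
qed

lemma sum_blocks: fixes K d :: nat and f :: "nat \<Rightarrow> 'a::comm_monoid_add" shows "(\<Sum>a<K * d. f a) = (\<Sum>k<K. \<Sum>i<d. f (k * d + i))"
proof (induction K)
  case 0 then show ?case by simp
next
  case (Suc K)
  have "(\<Sum>a<Suc K * d. f a) = (\<Sum>a\<in>{0..<K * d}. f a) + (\<Sum>a\<in>{K * d..<K * d + d}. f a)"
    by (simp add: atLeast0LessThan[symmetric] sum.atLeastLessThan_concat add.commute)
  also have "(\<Sum>a\<in>{K * d..<K * d + d}. f a) = (\<Sum>i<d. f (K * d + i))"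
    using sum.shift_bounds_nat_ivl[of f 0 "K * d" d] by (simp add: atLeast0LessThan add.commute)
  finally show ?case using Suc by (simp add: atLeast0LessThan)
qed

lemma block_psd:
  fixes Mk :: "nat \<Rightarrow> real mat" and C :: "nat \<Rightarrow> nat \<Rightarrow> real"
  assumes Mc: "\<And>k. k < K \<Longrightarrow> Mk k \<in> carrier_mat d d"
    and Mp: "\<And>k u. k < K \<Longrightarrow> u \<in> carrier_vec d \<Longrightarrow> 0 \<le> u \<bullet> (Mk k *\<^sub>v u)"
    and Ce: "\<And>k k' i j. k < K \<Longrightarrow> k' < K \<Longrightarrow> i < d \<Longrightarrow> j < d \<Longrightarrow>
         C (k * d + i) (k' * d + j) = (if k = k' then Mk k $$ (i,j) else 0)"
  shows "0 \<le> bil C (K * d) v v"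
proof -
  have inner: "\<And>k i. k < K \<Longrightarrow> i < d \<Longrightarrow> (\<Sum>b<K * d. C (k * d + i) b * v b) = (\<Sum>j<d. Mk k $$ (i,j) * v (k * d + j))"
  proof -
    fix k i assume k: "k < K" and i: "i < d"
    have "(\<Sum>b<K * d. C (k * d + i) b * v b) = (\<Sum>k'<K. \<Sum>j<d. C (k * d + i) (k' * d + j) * v (k' * d + j))"
      by (rule sum_blocks)
    also have "\<dots> = (\<Sum>k'<K. if k' = k then (\<Sum>j<d. Mk k $$ (i,j) * v (k * d + j)) else 0)"
      by (intro sum.cong refl) (use k i in \<open>auto simp: Ce\<close>)
    also have "\<dots> = (\<Sum>j<d. Mk k $$ (i,j) * v (k * d + j))" using k by simp
    finally show "(\<Sum>b<K * d. C (k * d + i) b * v b) = (\<Sum>j<d. Mk k $$ (i,j) * v (k * d + j))" .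
  qed
  have "bil C (K * d) v v = (\<Sum>k<K. \<Sum>i<d. v (k * d + i) * (\<Sum>b<K * d. C (k * d + i) b * v b))"
    unfolding bil_def by (rule sum_blocks)
  also have "\<dots> = (\<Sum>k<K. \<Sum>i<d. v (k * d + i) * (\<Sum>j<d. Mk k $$ (i,j) * v (k * d + j)))"
    by (intro sum.cong refl) (simp add: inner)
  also have "\<dots> = (\<Sum>k<K. vec d (\<lambda>i. v (k * d + i)) \<bullet> (Mk k *\<^sub>v vec d (\<lambda>i. v (k * d + i))))"
  proof (intro sum.cong refl)
    fix k assume k: "k \<in> {..<K}"
    have Mk: "Mk k \<in> carrier_mat d d" using Mc k by auto
    show "(\<Sum>i<d. v (k * d + i) * (\<Sum>j<d. Mk k $$ (i,j) * v (k * d + j))) =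
      vec d (\<lambda>i. v (k * d + i)) \<bullet> (Mk k *\<^sub>v vec d (\<lambda>i. v (k * d + i)))"
      unfolding scalar_prod_def using Mk by (simp add: atLeast0LessThan scalar_prod_def)
  qed
  also have "0 \<le> \<dots>" by (intro sum_nonneg Mp) auto
  finally show ?thesis by simp
qed


lemma calQ_psd: assumes "Q \<in> carrier_mat d d" "Qf \<in> carrier_mat d d"
  "\<forall>v \<in> carrier_vec d. 0 \<le> v \<bullet> (Q *\<^sub>v v)" "\<forall>v \<in> carrier_vec d. 0 \<le> v \<bullet> (Qf *\<^sub>v v)"
  shows "0 \<le> bil (\<lambda>a b. calQ d N Q Qf $$ (a,b)) (Suc N * d) v v"
proof (rule block_psd[where Mk="\<lambda>k. if k < N then Q else Qf"])
  fix k k' i j assume k: "k < Suc N" and k': "k' < Suc N" and i: "i < d" and j: "j < d"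
  have a: "k * d + i < Suc N * d"
  proof -
    have "k * d + i < k * d + d" using i by simp
    also have "\<dots> = Suc k * d" by simp
    also have "\<dots> \<le> Suc N * d" using k by (intro mult_right_mono) auto
    finally show ?thesis .
  qed
  have b: "k' * d + j < Suc N * d"
  proof -
    have "k' * d + j < k' * d + d" using j by simp
    also have "\<dots> = Suc k' * d" by simp
    also have "\<dots> \<le> Suc N * d" using k' by (intro mult_right_mono) auto
    finally show ?thesis .
  qed
  show "calQ d N Q Qf $$ (k * d + i, k' * d + j) = (if k = k' then (if k < N then Q else Qf) $$ (i,j) else 0)"
    unfolding calQ_def using a b i j by (simp del: mult_Suc)
qed (use assms in auto)

lemma calR_psd: assumes "R \<in> carrier_mat m m"
  "\<forall>v \<in> carrier_vec m. v \<noteq> 0\<^sub>v m \<longrightarrow> 0 < v \<bullet> (R *\<^sub>v v)"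
  shows "0 \<le> bil (\<lambda>a b. calR m N R $$ (a,b)) (N * m) v v"
proof (rule block_psd[where Mk="\<lambda>k. R"])
  fix k k' i j assume k: "k < N" and k': "k' < N" and i: "i < m" and j: "j < m"
  have a: "k * m + i < N * m"
  proof -
    have "k * m + i < Suc k * m" using i by simp
    also have "\<dots> \<le> N * m" using k by (intro mult_right_mono) auto
    finally show ?thesis .
  qed
  have b: "k' * m + j < N * m"
  proof -
    have "k' * m + j < Suc k' * m" using j by simp
    also have "\<dots> \<le> N * m" using k' by (intro mult_right_mono) auto
    finally show ?thesis .
  qed
  show "calR m N R $$ (k * m + i, k' * m + j) = (if k = k' then R $$ (i,j) else 0)"
    unfolding calR_def using a b i j by simp
next
  fix k and u :: "real Matrix.vec" assume u: "u \<in> carrier_vec m"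
  show "0 \<le> u \<bullet> (R *\<^sub>v u)"
  proof (cases "u = 0\<^sub>v m")
    case True then show ?thesis using assms(1) by (simp add: scalar_prod_def)
  next
    case False then show ?thesis using assms(2) u by (simp add: less_imp_le)
  qed
qed (use assms in auto)

locale ctx = prob_space M for M :: "'w measure" +
  fixes d m N \<kappa> t :: nat and w :: "nat \<Rightarrow> 'w \<Rightarrow> nat \<Rightarrow> real"
    and \<nu> :: "nat \<Rightarrow> 'w \<Rightarrow> real" and \<phi> :: "nat \<Rightarrow> (nat \<Rightarrow> real) \<Rightarrow> nat \<Rightarrow> real"
    and \<phi>max :: real
  assumes nu_vals: "\<forall>s. \<forall>\<omega> \<in> space M. \<nu> s \<omega> \<in> {0, 1}"
    and indep: "indep_vars
                  (\<lambda>k. case k of Inl s \<Rightarrow> PiM {..<d} (\<lambda>_. borel) | Inr s \<Rightarrow> PiM {0} (\<lambda>_. borel))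
                  (\<lambda>k \<omega>. case k of Inl s \<Rightarrow> restrict (w s \<omega>) {..<d}
                                 | Inr s \<Rightarrow> restrict (\<lambda>_. \<nu> s \<omega>) {0::nat})
                  (UNIV :: (nat + nat) set)"
    and phi_meas: "\<forall>i \<in> {1..N - 1}. (\<lambda>v. restrict (\<phi> i (restrict v {..<d})) {..<d})
                     \<in> PiM {..<d} (\<lambda>_. borel) \<rightarrow>\<^sub>M PiM {..<d} (\<lambda>_. borel)"
    and phi_bound: "\<forall>i \<in> {1..N - 1}. \<forall>v. \<forall>j < d. \<bar>\<phi> i v j\<bar> \<le> \<phi>max"
    and phi_mean: "\<forall>i \<in> {1..N - 1}. \<forall>s. \<forall>j < d.
                     (\<integral>\<omega>. \<phi> i (restrict (w s \<omega>) {..<d}) j \<partial>M) = 0"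
    and w_mean: "\<forall>s. \<forall>j < d. integrable M (\<lambda>\<omega>. w s \<omega> j) \<and> (\<integral>\<omega>. w s \<omega> j \<partial>M) = 0"
    and w_4th: "\<forall>s. \<forall>j < d. integrable M (\<lambda>\<omega>. (w s \<omega> j) ^ 4)"
begin

abbreviation "MM \<equiv> (\<lambda>k::nat+nat. case k of Inl s \<Rightarrow> PiM {..<d} (\<lambda>_. borel :: real measure) | Inr s \<Rightarrow> PiM {0::nat} (\<lambda>_. borel :: real measure))"
abbreviation "XX \<equiv> (\<lambda>(k::nat+nat) \<omega>. case k of Inl s \<Rightarrow> restrict (w s \<omega>) {..<d}
                                 | Inr s \<Rightarrow> restrict (\<lambda>_. \<nu> s \<omega>) {0::nat})"

definition "XN \<omega> = restrict (\<lambda>k. XX k \<omega>) (range (Inr :: nat \<Rightarrow> nat + nat))"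
definition "XW \<omega> = restrict (\<lambda>k. XX k \<omega>) (range (Inl :: nat \<Rightarrow> nat + nat))"

lemma indNW: "indep_var (PiM (range (Inr :: nat \<Rightarrow> nat + nat)) MM) XN (PiM (range (Inl :: nat \<Rightarrow> nat + nat)) MM) XW"
  unfolding XN_def XW_def
  by (rule indep_var_restrict[OF indep]) auto

lemma indep_mult:
  fixes F G :: "'w \<Rightarrow> real"
  assumes f: "f \<in> borel_measurable (PiM (range (Inr :: nat \<Rightarrow> nat + nat)) MM)"
    and g: "g \<in> borel_measurable (PiM (range (Inl :: nat \<Rightarrow> nat + nat)) MM)"
    and F: "\<And>\<omega>. F \<omega> = f (XN \<omega>)" and G: "\<And>\<omega>. G \<omega> = g (XW \<omega>)"
    and iF: "integrable M F" and iG: "integrable M G"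
  shows "(\<integral>\<omega>. F \<omega> * G \<omega> \<partial>M) = (\<integral>\<omega>. F \<omega> \<partial>M) * (\<integral>\<omega>. G \<omega> \<partial>M)"
    "integrable M (\<lambda>\<omega>. F \<omega> * G \<omega>)"
proof -
  have "indep_var borel (f \<circ> XN) borel (g \<circ> XW)"
    by (rule indep_var_compose[OF indNW f g])
  moreover have "F = f \<circ> XN" "G = g \<circ> XW" using F G by auto
  ultimately have i: "indep_var borel F borel G" by simp
  show "(\<integral>\<omega>. F \<omega> * G \<omega> \<partial>M) = (\<integral>\<omega>. F \<omega> \<partial>M) * (\<integral>\<omega>. G \<omega> \<partial>M)"
    using indep_var_lebesgue_integral[OF i iF iG] .
  show "integrable M (\<lambda>\<omega>. F \<omega> * G \<omega>)"
    using indep_var_integrable[OF i iF iG] .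
qed

lemma meas_nu: "(\<lambda>y. y (Inr s) (0::nat)) \<in> borel_measurable (PiM (range (Inr :: nat \<Rightarrow> nat + nat)) MM)"
proof -
  have "(\<lambda>y. y (Inr s)) \<in> PiM (range (Inr :: nat \<Rightarrow> nat + nat)) MM \<rightarrow>\<^sub>M MM (Inr s)"
    by (rule measurable_component_singleton[of "Inr s" "range (Inr :: nat \<Rightarrow> nat + nat)" MM]) auto
  then have "(\<lambda>y. y (Inr s)) \<in> PiM (range (Inr :: nat \<Rightarrow> nat + nat)) MM \<rightarrow>\<^sub>M PiM {0::nat} (\<lambda>_. borel)" by simp
  moreover have "(\<lambda>z. z (0::nat)) \<in> PiM {0::nat} (\<lambda>_. borel) \<rightarrow>\<^sub>M (borel :: real measure)"
    by (rule measurable_component_singleton) auto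
  ultimately show ?thesis by (rule measurable_compose)
qed

lemma meas_wcomp: "(\<lambda>y. y (Inl s)) \<in> PiM (range (Inl :: nat \<Rightarrow> nat + nat)) MM \<rightarrow>\<^sub>M PiM {..<d} (\<lambda>_. borel)"
proof -
  have "(\<lambda>y. y (Inl s)) \<in> PiM (range (Inl :: nat \<Rightarrow> nat + nat)) MM \<rightarrow>\<^sub>M MM (Inl s)"
    by (rule measurable_component_singleton[of "Inl s" "range (Inl :: nat \<Rightarrow> nat + nat)" MM]) auto
  then show ?thesis by simp
qed

lemma meas_w: "j < d \<Longrightarrow> (\<lambda>y. y (Inl s) j) \<in> borel_measurable (PiM (range (Inl :: nat \<Rightarrow> nat + nat)) MM)"
  by (rule measurable_compose[OF meas_wcomp]) (rule measurable_component_singleton, auto)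

lemma meas_phi: assumes "i \<in> {1..N-1}" "j < d"
  shows "(\<lambda>y. \<phi> i (restrict (y (Inl s)) {..<d}) j) \<in> borel_measurable (PiM (range (Inl :: nat \<Rightarrow> nat + nat)) MM)"
proof -
  have "(\<lambda>v. restrict (\<phi> i (restrict v {..<d})) {..<d} j) \<in> borel_measurable (PiM {..<d} (\<lambda>_. borel))"
    by (rule measurable_compose[OF phi_meas[rule_format, OF assms(1)]])
       (rule measurable_component_singleton, use assms in auto)
  then have "(\<lambda>v. \<phi> i (restrict v {..<d}) j) \<in> borel_measurable (PiM {..<d} (\<lambda>_. borel))"
    using assms(2) by simp
  from measurable_compose[OF meas_wcomp this] show ?thesis by simp
qed

lemma XN_meas: "XN \<in> M \<rightarrow>\<^sub>M PiM (range (Inr :: nat \<Rightarrow> nat + nat)) MM"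
  and XW_meas: "XW \<in> M \<rightarrow>\<^sub>M PiM (range (Inl :: nat \<Rightarrow> nat + nat)) MM"
  using indNW unfolding indep_var_eq by auto

definition "sv i \<omega> = (if i div m < \<kappa> then \<nu> (t + i div m) \<omega> else 1)"
definition "ph k \<omega> = \<phi> (Suc (k div d)) (restrict (w (t + k div d) \<omega>) {..<d}) (k mod d)"
definition "Wv j \<omega> = w (t + j div d) \<omega> (j mod d)"
definition "sf i y = (if i div m < \<kappa> then y (Inr (t + i div m)) (0::nat) else (1::real))"
definition "pf k y = \<phi> (Suc (k div d)) (restrict (y (Inl (t + k div d))) {..<d}) (k mod d)"
definition "wfn j y = y (Inl (t + j div d)) (j mod d)"

lemma sf_meas: "sf i \<in> borel_measurable (PiM (range (Inr :: nat \<Rightarrow> nat + nat)) MM)"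
  unfolding sf_def using meas_nu by auto

lemma sf_XN: "sf i (XN \<omega>) = sv i \<omega>"
  unfolding sf_def sv_def XN_def by auto

lemma pf_meas: "k < (N - 1) * d \<Longrightarrow> pf k \<in> borel_measurable (PiM (range (Inl :: nat \<Rightarrow> nat + nat)) MM)"
  unfolding pf_def
proof (rule meas_phi)
  assume k: "k < (N - 1) * d"
  then have d: "0 < d" by (cases d) auto
  from k have "k div d < N - 1" by (simp add: div_less_iff_less_mult d)
  then show "Suc (k div d) \<in> {1..N-1}" by auto
  show "k mod d < d" using d by auto
qed

lemma pf_XW: "pf k (XW \<omega>) = ph k \<omega>"
  unfolding pf_def ph_def XW_def by auto

lemma wfn_meas: "j < N * d \<Longrightarrow> wfn j \<in> borel_measurable (PiM (range (Inl :: nat \<Rightarrow> nat + nat)) MM)"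
  unfolding wfn_def by (rule meas_w) (cases d, auto)

lemma wfn_XW: "j < N * d \<Longrightarrow> wfn j (XW \<omega>) = Wv j \<omega>"
  unfolding wfn_def Wv_def XW_def by (cases d) auto

lemma sv_meas[measurable]: "sv i \<in> borel_measurable M"
proof -
  have "sf i \<circ> XN \<in> borel_measurable M" using measurable_comp[OF XN_meas sf_meas] .
  then show ?thesis by (simp add: comp_def sf_XN)
qed

lemma ph_meas[measurable]: "k < (N - 1) * d \<Longrightarrow> ph k \<in> borel_measurable M"
proof -
  assume k: "k < (N - 1) * d"
  have "pf k \<circ> XW \<in> borel_measurable M" using measurable_comp[OF XW_meas pf_meas[OF k]] .
  then show ?thesis by (simp add: comp_def pf_XW)
qed

lemma Wv_meas[measurable]: "j < N * d \<Longrightarrow> Wv j \<in> borel_measurable M"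
proof -
  assume k: "j < N * d"
  have "wfn j \<circ> XW \<in> borel_measurable M" using measurable_comp[OF XW_meas wfn_meas[OF k]] .
  then show ?thesis using k by (simp add: comp_def wfn_XW cong: measurable_cong)
qed

lemma sv_bound: "\<omega> \<in> space M \<Longrightarrow> \<bar>sv i \<omega>\<bar> \<le> 1"
  using nu_vals unfolding sv_def by (auto split: if_splits) (metis abs_0 abs_one insert_iff order_refl singletonD zero_le_one)

lemma ph_bound: "k < (N - 1) * d \<Longrightarrow> \<bar>ph k \<omega>\<bar> \<le> \<phi>max"
proof -
  assume k: "k < (N - 1) * d"
  then have d: "0 < d" by (cases d) auto
  from k have "k div d < N - 1" by (simp add: div_less_iff_less_mult d)
  then have sk: "Suc (k div d) \<in> {1..N-1}" by auto
  then show ?thesis unfolding ph_def using phi_bound[rule_format, OF sk, where j="k mod d"] d by simp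
qed

lemma ph_mean: "k < (N - 1) * d \<Longrightarrow> (\<integral>\<omega>. ph k \<omega> \<partial>M) = 0"
proof -
  assume k: "k < (N - 1) * d"
  then have d: "0 < d" by (cases d) auto
  from k have "k div d < N - 1" by (simp add: div_less_iff_less_mult d)
  then have sk: "Suc (k div d) \<in> {1..N-1}" by auto
  then show ?thesis unfolding ph_def using phi_mean[rule_format, OF sk, where j="k mod d" and s="t + k div d"] d by simp
qed

lemma Wv_int: "j < N * d \<Longrightarrow> integrable M (Wv j)"
  and Wv_mean: "j < N * d \<Longrightarrow> (\<integral>\<omega>. Wv j \<omega> \<partial>M) = 0"
proof -
  assume j: "j < N * d"
  then have d: "0 < d" by (cases d) auto
  show "integrable M (Wv j)" unfolding Wv_def using w_mean[rule_format, of "j mod d"] d by simp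
  show "(\<integral>\<omega>. Wv j \<omega> \<partial>M) = 0" unfolding Wv_def using w_mean[rule_format, of "j mod d"] d by simp
qed

lemma Wv_sq: "j < N * d \<Longrightarrow> integrable M (\<lambda>\<omega>. (Wv j \<omega>)\<^sup>2)"
proof -
  assume j: "j < N * d"
  then have d: "0 < d" by (cases d) auto
  have i4: "integrable M (\<lambda>\<omega>. (Wv j \<omega>) ^ 4)" unfolding Wv_def using w_4th[rule_format, of "j mod d"] d by simp
  have "integrable M (\<lambda>\<omega>. 1 + (Wv j \<omega>) ^ 4)" using i4 by auto
  then show ?thesis
  proof (rule Bochner_Integration.integrable_bound)
    show "(\<lambda>\<omega>. (Wv j \<omega>)\<^sup>2) \<in> borel_measurable M" using j by measurable
    show "AE x in M. norm ((Wv j x)\<^sup>2) \<le> norm (1 + Wv j x ^ 4)"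
    proof (rule AE_I2)
      fix x
      have "(Wv j x)\<^sup>2 \<le> 1 + (Wv j x)^4"
      proof (cases "\<bar>Wv j x\<bar> \<le> 1")
        case True
        then have "(Wv j x)\<^sup>2 \<le> 1" using abs_square_le_1 by blast
        moreover have "0 \<le> Wv j x ^ 4" by (simp add: zero_le_even_power)
        ultimately show ?thesis by linarith
      next
        case False
        then have h1: "1 \<le> (Wv j x)\<^sup>2" using abs_square_le_1[of "Wv j x"] abs_square_less_1[of "Wv j x"] by linarith
        have "(Wv j x)\<^sup>2 * 1 \<le> (Wv j x)\<^sup>2 * (Wv j x)\<^sup>2"
          by (rule mult_left_mono[OF h1]) simp
        then show ?thesis by (simp add: power2_eq_square power4_eq_xxxx mult.assoc)
      qed
      then show "norm ((Wv j x)\<^sup>2) \<le> norm (1 + Wv j x ^ 4)" by auto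
    qed
  qed
qed


lemma absprod_le: "\<bar>a * b\<bar> \<le> a\<^sup>2 + (b::real)\<^sup>2"
proof -
  have "0 \<le> (\<bar>a\<bar> - \<bar>b\<bar>)\<^sup>2" by simp
  then have "2 * (\<bar>a\<bar> * \<bar>b\<bar>) \<le> \<bar>a\<bar>\<^sup>2 + \<bar>b\<bar>\<^sup>2" by (simp add: power2_diff)
  moreover have "0 \<le> \<bar>a\<bar> * \<bar>b\<bar>" by simp
  ultimately show ?thesis unfolding abs_mult power2_abs using zero_le_power2[of a] zero_le_power2[of b] by linarith
qed

definition sqi :: "('w \<Rightarrow> real) \<Rightarrow> bool" where "sqi f \<longleftrightarrow> f \<in> borel_measurable M \<and> integrable M (\<lambda>\<omega>. (f \<omega>)\<^sup>2)"

lemma sqi_prod_int: fixes f g :: "'w \<Rightarrow> real" assumes "sqi f" "sqi g" shows "integrable M (\<lambda>\<omega>. f \<omega> * g \<omega>)"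
proof -
  have "integrable M (\<lambda>\<omega>. (f \<omega>)\<^sup>2 + (g \<omega>)\<^sup>2)" using assms unfolding sqi_def by auto
  then show ?thesis
  proof (rule Bochner_Integration.integrable_bound)
    show "(\<lambda>\<omega>. f \<omega> * g \<omega>) \<in> borel_measurable M" using assms unfolding sqi_def by auto
    show "AE x in M. norm (f x * g x) \<le> norm ((f x)\<^sup>2 + (g x)\<^sup>2)"
    proof (rule AE_I2)
      fix x
      have "\<bar>f x * g x\<bar> \<le> (f x)\<^sup>2 + (g x)\<^sup>2"
        by (rule absprod_le)
      then show "norm (f x * g x) \<le> norm ((f x)\<^sup>2 + (g x)\<^sup>2)" by simp
    qed
  qed
qed


lemma sqi_add: assumes "sqi f" "sqi g" shows "sqi (\<lambda>\<omega>. f \<omega> + g \<omega>)"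
proof -
  have m: "(\<lambda>\<omega>. f \<omega> + g \<omega>) \<in> borel_measurable M" using assms unfolding sqi_def by auto
  have "integrable M (\<lambda>\<omega>. 2 * (f \<omega>)\<^sup>2 + 2 * (g \<omega>)\<^sup>2)" using assms unfolding sqi_def by auto
  then have "integrable M (\<lambda>\<omega>. (f \<omega> + g \<omega>)\<^sup>2)"
  proof (rule Bochner_Integration.integrable_bound)
    show "(\<lambda>\<omega>. (f \<omega> + g \<omega>)\<^sup>2) \<in> borel_measurable M" using m by measurable
    show "AE x in M. norm ((f x + g x)\<^sup>2) \<le> norm (2 * (f x)\<^sup>2 + 2 * (g x)\<^sup>2)"
    proof (rule AE_I2)
      fix x
      have "0 \<le> (f x - g x)\<^sup>2" by simp
      then have "(f x + g x)\<^sup>2 \<le> 2 * (f x)\<^sup>2 + 2 * (g x)\<^sup>2" by (simp add: power2_sum power2_diff)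
      then show "norm ((f x + g x)\<^sup>2) \<le> norm (2 * (f x)\<^sup>2 + 2 * (g x)\<^sup>2)" by simp
    qed
  qed
  with m show ?thesis unfolding sqi_def by auto
qed

lemma sqi_cmult: assumes "sqi f" shows "sqi (\<lambda>\<omega>. c * f \<omega>)"
  using assms unfolding sqi_def by (auto simp: power_mult_distrib)

lemma sqi_const: "sqi (\<lambda>\<omega>. c)"
  unfolding sqi_def by auto

lemma sqi_sum: "finite I \<Longrightarrow> (\<And>i. i \<in> I \<Longrightarrow> sqi (f i)) \<Longrightarrow> sqi (\<lambda>\<omega>. \<Sum>i\<in>I. f i \<omega>)"
proof (induction I rule: finite_induct)
  case empty then show ?case using sqi_const[of 0] by simp
next
  case (insert x F)
  then show ?case by (simp add: sqi_add)
qed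

lemma sqi_bdd: assumes "f \<in> borel_measurable M" "\<And>\<omega>. \<omega> \<in> space M \<Longrightarrow> \<bar>f \<omega>\<bar> \<le> C" shows "sqi f"
  unfolding sqi_def
proof
  show "f \<in> borel_measurable M" by fact
  show "integrable M (\<lambda>\<omega>. (f \<omega>)\<^sup>2)"
  proof (rule integrable_const_bound[where B="C\<^sup>2"])
    show "AE x in M. norm ((f x)\<^sup>2) \<le> C\<^sup>2"
    proof (rule AE_I2)
      fix x assume "x \<in> space M"
      then have "\<bar>f x\<bar> \<le> C" by (rule assms(2))
      then have "\<bar>f x\<bar>\<^sup>2 \<le> C\<^sup>2" by (rule power_mono) simp
      then show "norm ((f x)\<^sup>2) \<le> C\<^sup>2" by simp
    qed
    show "(\<lambda>x. (f x)\<^sup>2) \<in> borel_measurable M" using assms(1) by measurable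
  qed
qed

lemma sqi_mult_bdd: assumes "sqi f" "sqi g" "\<And>\<omega>. \<omega> \<in> space M \<Longrightarrow> \<bar>f \<omega>\<bar> \<le> C" shows "sqi (\<lambda>\<omega>. f \<omega> * g \<omega>)"
  unfolding sqi_def
proof
  show m: "(\<lambda>\<omega>. f \<omega> * g \<omega>) \<in> borel_measurable M" using assms unfolding sqi_def by auto
  have "integrable M (\<lambda>\<omega>. C\<^sup>2 * (g \<omega>)\<^sup>2)" using assms unfolding sqi_def by auto
  then show "integrable M (\<lambda>\<omega>. (f \<omega> * g \<omega>)\<^sup>2)"
  proof (rule Bochner_Integration.integrable_bound)
    show "(\<lambda>\<omega>. (f \<omega> * g \<omega>)\<^sup>2) \<in> borel_measurable M" using m by measurable
    show "AE x in M. norm ((f x * g x)\<^sup>2) \<le> norm (C\<^sup>2 * (g x)\<^sup>2)"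
    proof (rule AE_I2)
      fix x assume "x \<in> space M"
      then have "\<bar>f x\<bar> \<le> C" by (rule assms(3))
      then have "\<bar>f x\<bar>\<^sup>2 \<le> C\<^sup>2" by (rule power_mono) simp
      then have "(f x)\<^sup>2 * (g x)\<^sup>2 \<le> C\<^sup>2 * (g x)\<^sup>2" by (simp add: mult_right_mono)
      then show "norm ((f x * g x)\<^sup>2) \<le> norm (C\<^sup>2 * (g x)\<^sup>2)" by (simp add: power_mult_distrib)
    qed
  qed
qed

lemma sqi_sv: "sqi (sv i)" by (rule sqi_bdd[OF sv_meas sv_bound])
lemma sqi_ph: "k < (N - 1) * d \<Longrightarrow> sqi (ph k)" by (rule sqi_bdd[OF ph_meas ph_bound])
lemma sqi_Wv: "j < N * d \<Longrightarrow> sqi (Wv j)" unfolding sqi_def using Wv_meas Wv_sq by auto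

definition "u \<eta> \<Theta> i \<omega> = \<eta> $ i + (\<Sum>k<(N - 1) * d. \<Theta> $$ (i,k) * ph k \<omega>)"
definition "uf \<eta> \<Theta> i y = \<eta> $ i + (\<Sum>k<(N - 1) * d. \<Theta> $$ (i,k) * pf k y)"

lemma uf_meas: "uf \<eta> \<Theta> i \<in> borel_measurable (PiM (range (Inl :: nat \<Rightarrow> nat + nat)) MM)"
  unfolding uf_def using pf_meas by (intro borel_measurable_add borel_measurable_const borel_measurable_sum
      borel_measurable_times) auto

lemma uf_XW: "uf \<eta> \<Theta> i (XW \<omega>) = u \<eta> \<Theta> i \<omega>"
  unfolding uf_def u_def by (simp add: pf_XW)

lemma u_meas: "u \<eta> \<Theta> i \<in> borel_measurable M"
  unfolding u_def by measurable

lemma u_bound: "\<bar>u \<eta> \<Theta> i \<omega>\<bar> \<le> \<bar>\<eta> $ i\<bar> + (\<Sum>k<(N - 1) * d. \<bar>\<Theta> $$ (i,k)\<bar> * \<phi>max)"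
proof -
  have "\<bar>u \<eta> \<Theta> i \<omega>\<bar> \<le> \<bar>\<eta> $ i\<bar> + \<bar>\<Sum>k<(N - 1) * d. \<Theta> $$ (i,k) * ph k \<omega>\<bar>"
    unfolding u_def by (rule abs_triangle_ineq)
  also have "\<bar>\<Sum>k<(N - 1) * d. \<Theta> $$ (i,k) * ph k \<omega>\<bar> \<le> (\<Sum>k<(N - 1) * d. \<bar>\<Theta> $$ (i,k) * ph k \<omega>\<bar>)"
    by (rule sum_abs)
  also have "\<dots> \<le> (\<Sum>k<(N - 1) * d. \<bar>\<Theta> $$ (i,k)\<bar> * \<phi>max)"
    by (rule sum_mono) (simp add: abs_mult mult_left_mono ph_bound)
  finally show ?thesis by simp
qed

lemma sqi_u: "sqi (u \<eta> \<Theta> i)" by (rule sqi_bdd[OF u_meas u_bound])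

lemma int_u: "integrable M (u \<eta> \<Theta> i)"
  using sqi_prod_int[OF sqi_u sqi_const[of 1]] by simp

lemma E_u: "(\<integral>\<omega>. u \<eta> \<Theta> i \<omega> \<partial>M) = \<eta> $ i"
proof -
  have "\<And>k. k \<in> {..<(N - 1) * d} \<Longrightarrow> integrable M (ph k)"
    using sqi_prod_int[OF sqi_ph sqi_const[of 1]] by simp
  then have i: "\<And>k. k \<in> {..<(N - 1) * d} \<Longrightarrow> integrable M (\<lambda>\<omega>. \<Theta> $$ (i,k) * ph k \<omega>)" by auto
  have iS: "integrable M (\<lambda>\<omega>. \<Sum>k<(N - 1) * d. \<Theta> $$ (i,k) * ph k \<omega>)"
    by (rule Bochner_Integration.integrable_sum[where f="\<lambda>k \<omega>. \<Theta> $$ (i,k) * ph k \<omega>"]) (rule i)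
  have "(\<integral>\<omega>. (\<Sum>k<(N - 1) * d. \<Theta> $$ (i,k) * ph k \<omega>) \<partial>M) = (\<Sum>k<(N - 1) * d. \<integral>\<omega>. \<Theta> $$ (i,k) * ph k \<omega> \<partial>M)"
    by (rule Bochner_Integration.integral_sum[where f="\<lambda>k \<omega>. \<Theta> $$ (i,k) * ph k \<omega>"]) (rule i)
  also have "\<dots> = 0" by (simp add: ph_mean)
  finally have "(\<integral>\<omega>. (\<Sum>k<(N - 1) * d. \<Theta> $$ (i,k) * ph k \<omega>) \<partial>M) = 0" .
  then show ?thesis unfolding u_def using iS by (simp add: prob_space)
qed


lemma int_ph: "k < (N - 1) * d \<Longrightarrow> integrable M (ph k)"
  using sqi_prod_int[OF sqi_ph sqi_const[of 1]] by simp

lemma E_su: "(\<integral>\<omega>. sv i \<omega> * u \<eta> \<Theta> i \<omega> \<partial>M) = (\<integral>\<omega>. sv i \<omega> \<partial>M) * \<eta> $ i"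
proof -
  have "(\<integral>\<omega>. sv i \<omega> * u \<eta> \<Theta> i \<omega> \<partial>M) = (\<integral>\<omega>. sv i \<omega> \<partial>M) * (\<integral>\<omega>. u \<eta> \<Theta> i \<omega> \<partial>M)"
    by (rule indep_mult(1)[OF sf_meas uf_meas sf_XN[symmetric] uf_XW[symmetric]])
       (use sqi_prod_int[OF sqi_sv sqi_const[of 1]] int_u in auto)
  then show ?thesis by (simp add: E_u)
qed

lemma E_susu: "(\<integral>\<omega>. (sv i \<omega> * u \<eta> \<Theta> i \<omega>) * (sv j \<omega> * u \<eta> \<Theta> j \<omega>) \<partial>M)
   = (\<integral>\<omega>. sv i \<omega> * sv j \<omega> \<partial>M) * (\<integral>\<omega>. u \<eta> \<Theta> i \<omega> * u \<eta> \<Theta> j \<omega> \<partial>M)"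
proof -
  have e: "\<And>\<omega>. (sv i \<omega> * u \<eta> \<Theta> i \<omega>) * (sv j \<omega> * u \<eta> \<Theta> j \<omega>)
     = (sv i \<omega> * sv j \<omega>) * (u \<eta> \<Theta> i \<omega> * u \<eta> \<Theta> j \<omega>)" by (simp add: mult_ac)
  have "(\<integral>\<omega>. (sv i \<omega> * sv j \<omega>) * (u \<eta> \<Theta> i \<omega> * u \<eta> \<Theta> j \<omega>) \<partial>M)
   = (\<integral>\<omega>. sv i \<omega> * sv j \<omega> \<partial>M) * (\<integral>\<omega>. u \<eta> \<Theta> i \<omega> * u \<eta> \<Theta> j \<omega> \<partial>M)"
    by (rule indep_mult(1)[where f="\<lambda>y. sf i y * sf j y" and g="\<lambda>y. uf \<eta> \<Theta> i y * uf \<eta> \<Theta> j y"])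
       (use sf_meas uf_meas sf_XN uf_XW sqi_prod_int[OF sqi_sv sqi_sv] sqi_prod_int[OF sqi_u sqi_u] in auto)
  then show ?thesis by (simp add: e)
qed

lemma E_suW: "j < N * d \<Longrightarrow> (\<integral>\<omega>. (sv i \<omega> * u \<eta> \<Theta> i \<omega>) * Wv j \<omega> \<partial>M)
   = (\<integral>\<omega>. sv i \<omega> \<partial>M) * (\<integral>\<omega>. u \<eta> \<Theta> i \<omega> * Wv j \<omega> \<partial>M)"
proof -
  assume j: "j < N * d"
  have e: "\<And>\<omega>. (sv i \<omega> * u \<eta> \<Theta> i \<omega>) * Wv j \<omega> = sv i \<omega> * (u \<eta> \<Theta> i \<omega> * Wv j \<omega>)"
    by (simp add: mult_ac)
  have "(\<integral>\<omega>. sv i \<omega> * (u \<eta> \<Theta> i \<omega> * Wv j \<omega>) \<partial>M)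
   = (\<integral>\<omega>. sv i \<omega> \<partial>M) * (\<integral>\<omega>. u \<eta> \<Theta> i \<omega> * Wv j \<omega> \<partial>M)"
    by (rule indep_mult(1)[where f="sf i" and g="\<lambda>y. uf \<eta> \<Theta> i y * wfn j y"])
       (use sf_meas uf_meas wfn_meas[OF j] sf_XN uf_XW wfn_XW[OF j] sqi_prod_int[OF sqi_sv sqi_const[of 1]]
          sqi_prod_int[OF sqi_u sqi_Wv[OF j]] in auto)
  then show ?thesis by (simp add: e)
qed

lemma E_uu: "(\<integral>\<omega>. u \<eta> \<Theta> i \<omega> * u \<eta> \<Theta> j \<omega> \<partial>M) = \<eta> $ i * \<eta> $ j
   + (\<Sum>k<(N - 1) * d. \<Sum>l<(N - 1) * d. \<Theta> $$ (i,k) * \<Theta> $$ (j,l) * (\<integral>\<omega>. ph k \<omega> * ph l \<omega> \<partial>M))"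
proof -
  let ?q = "(N - 1) * d"
  have e: "\<And>\<omega>. u \<eta> \<Theta> i \<omega> * u \<eta> \<Theta> j \<omega> = \<eta> $ i * \<eta> $ j
     + (\<Sum>l<?q. \<eta> $ i * \<Theta> $$ (j,l) * ph l \<omega>) + (\<Sum>k<?q. \<eta> $ j * \<Theta> $$ (i,k) * ph k \<omega>)
     + (\<Sum>k<?q. \<Sum>l<?q. \<Theta> $$ (i,k) * \<Theta> $$ (j,l) * (ph k \<omega> * ph l \<omega>))"
  proof -
    fix \<omega>
    let ?A = "\<Sum>k<?q. \<Theta> $$ (i,k) * ph k \<omega>" and ?B = "\<Sum>l<?q. \<Theta> $$ (j,l) * ph l \<omega>"
    have "u \<eta> \<Theta> i \<omega> * u \<eta> \<Theta> j \<omega> = \<eta> $ i * \<eta> $ j + \<eta> $ i * ?B + \<eta> $ j * ?A + ?A * ?B"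
      unfolding u_def by (simp add: algebra_simps)
    also have "?A * ?B = (\<Sum>k<?q. \<Sum>l<?q. \<Theta> $$ (i,k) * \<Theta> $$ (j,l) * (ph k \<omega> * ph l \<omega>))"
      unfolding sum_product by (simp add: mult_ac)
    also have "\<eta> $ i * ?B = (\<Sum>l<?q. \<eta> $ i * \<Theta> $$ (j,l) * ph l \<omega>)"
      by (simp add: sum_distrib_left mult_ac)
    also have "\<eta> $ j * ?A = (\<Sum>k<?q. \<eta> $ j * \<Theta> $$ (i,k) * ph k \<omega>)"
      by (simp add: sum_distrib_left mult_ac)
    finally show "?thesis \<omega>" .
  qed
  have i1: "integrable M (\<lambda>\<omega>. \<Sum>l<?q. \<eta> $ i * \<Theta> $$ (j,l) * ph l \<omega>)"
    by (rule Bochner_Integration.integrable_sum) (simp add: int_ph)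
  have i2: "integrable M (\<lambda>\<omega>. \<Sum>k<?q. \<eta> $ j * \<Theta> $$ (i,k) * ph k \<omega>)"
    by (rule Bochner_Integration.integrable_sum) (simp add: int_ph)
  have ipp: "\<And>k l. k < ?q \<Longrightarrow> l < ?q \<Longrightarrow> integrable M (\<lambda>\<omega>. ph k \<omega> * ph l \<omega>)"
    using sqi_prod_int[OF sqi_ph sqi_ph] by blast
  have i3: "integrable M (\<lambda>\<omega>. \<Sum>k<?q. \<Sum>l<?q. \<Theta> $$ (i,k) * \<Theta> $$ (j,l) * (ph k \<omega> * ph l \<omega>))"
    by (intro Bochner_Integration.integrable_sum integrable_mult_right) (simp add: ipp)
  have z1: "(\<integral>\<omega>. (\<Sum>l<?q. \<eta> $ i * \<Theta> $$ (j,l) * ph l \<omega>) \<partial>M) = 0"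
    by (subst Bochner_Integration.integral_sum) (simp_all add: int_ph ph_mean)
  have z2: "(\<integral>\<omega>. (\<Sum>k<?q. \<eta> $ j * \<Theta> $$ (i,k) * ph k \<omega>) \<partial>M) = 0"
    by (subst Bochner_Integration.integral_sum) (simp_all add: int_ph ph_mean)
  have z3: "(\<integral>\<omega>. (\<Sum>k<?q. \<Sum>l<?q. \<Theta> $$ (i,k) * \<Theta> $$ (j,l) * (ph k \<omega> * ph l \<omega>)) \<partial>M)
     = (\<Sum>k<?q. \<Sum>l<?q. \<Theta> $$ (i,k) * \<Theta> $$ (j,l) * (\<integral>\<omega>. ph k \<omega> * ph l \<omega> \<partial>M))"
  proof -
    have "(\<integral>\<omega>. (\<Sum>k<?q. \<Sum>l<?q. \<Theta> $$ (i,k) * \<Theta> $$ (j,l) * (ph k \<omega> * ph l \<omega>)) \<partial>M)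
      = (\<Sum>k<?q. \<integral>\<omega>. (\<Sum>l<?q. \<Theta> $$ (i,k) * \<Theta> $$ (j,l) * (ph k \<omega> * ph l \<omega>)) \<partial>M)"
      by (rule Bochner_Integration.integral_sum[where f="\<lambda>k \<omega>. \<Sum>l<?q. \<Theta> $$ (i,k) * \<Theta> $$ (j,l) * (ph k \<omega> * ph l \<omega>)"])
         (intro Bochner_Integration.integrable_sum integrable_mult_right, simp add: ipp)
    also have "\<dots> = (\<Sum>k<?q. \<Sum>l<?q. \<Theta> $$ (i,k) * \<Theta> $$ (j,l) * (\<integral>\<omega>. ph k \<omega> * ph l \<omega> \<partial>M))"
    proof (rule sum.cong[OF refl])
      fix k assume k: "k \<in> {..<?q}"
      show "(\<integral>\<omega>. (\<Sum>l<?q. \<Theta> $$ (i,k) * \<Theta> $$ (j,l) * (ph k \<omega> * ph l \<omega>)) \<partial>M)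
         = (\<Sum>l<?q. \<Theta> $$ (i,k) * \<Theta> $$ (j,l) * (\<integral>\<omega>. ph k \<omega> * ph l \<omega> \<partial>M))"
        by (subst Bochner_Integration.integral_sum[where f="\<lambda>l \<omega>. \<Theta> $$ (i,k) * \<Theta> $$ (j,l) * (ph k \<omega> * ph l \<omega>)"])
           (use k ipp in auto)
    qed
    finally show ?thesis .
  qed
  show ?thesis unfolding e using i1 i2 i3 z1 z2 z3 by (simp add: prob_space)
qed

lemma E_uW: "j < N * d \<Longrightarrow> (\<integral>\<omega>. u \<eta> \<Theta> i \<omega> * Wv j \<omega> \<partial>M) =
    (\<Sum>k<(N - 1) * d. \<Theta> $$ (i,k) * (\<integral>\<omega>. Wv j \<omega> * ph k \<omega> \<partial>M))"
proof -
  assume j: "j < N * d"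
  let ?q = "(N - 1) * d"
  have e: "\<And>\<omega>. u \<eta> \<Theta> i \<omega> * Wv j \<omega> = \<eta> $ i * Wv j \<omega>
     + (\<Sum>k<?q. \<Theta> $$ (i,k) * (Wv j \<omega> * ph k \<omega>))"
    unfolding u_def by (simp add: algebra_simps sum_distrib_left sum_distrib_right)
  have ipw: "\<And>k. k < ?q \<Longrightarrow> integrable M (\<lambda>\<omega>. Wv j \<omega> * ph k \<omega>)"
    using sqi_prod_int[OF sqi_Wv[OF j] sqi_ph] by blast
  have i3: "integrable M (\<lambda>\<omega>. \<Sum>k<?q. \<Theta> $$ (i,k) * (Wv j \<omega> * ph k \<omega>))"
    by (intro Bochner_Integration.integrable_sum integrable_mult_right) (simp add: ipw)
  have z3: "(\<integral>\<omega>. (\<Sum>k<?q. \<Theta> $$ (i,k) * (Wv j \<omega> * ph k \<omega>)) \<partial>M)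
     = (\<Sum>k<?q. \<Theta> $$ (i,k) * (\<integral>\<omega>. Wv j \<omega> * ph k \<omega> \<partial>M))"
    by (simp add: ipw Bochner_Integration.integral_sum integrable_mult_right)
  show ?thesis unfolding e using i3 z3 Wv_int[OF j] Wv_mean[OF j] by simp
qed


definition "ua \<eta> \<Theta> i \<omega> = sv i \<omega> * u \<eta> \<Theta> i \<omega>"
definition "xsv A B x \<eta> \<Theta> a \<omega> = (calA d N A *\<^sub>v x) $ a + (\<Sum>i<N * m. calB d m N A B $$ (a,i) * ua \<eta> \<Theta> i \<omega>)
    + (\<Sum>j<N * d. calD d N A $$ (a,j) * Wv j \<omega>)"

lemma Smat_idx: "i < N * m \<Longrightarrow> j < N * m \<Longrightarrow> Smat m N \<kappa> \<nu> t \<omega> $$ (i,j) = (if i = j then sv i \<omega> else 0)"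
  unfolding Smat_def sv_def by auto

lemma Phi_idx: "k < (N - 1) * d \<Longrightarrow> Phistack d N \<phi> w t \<omega> $ k = ph k \<omega>"
  unfolding Phistack_def ph_def by simp

lemma W_idx: "j < N * d \<Longrightarrow> Wstack d N w t \<omega> $ j = Wv j \<omega>"
  unfolding Wstack_def Wv_def by simp

lemma dims[simp]:
  "dim_row (calA d N A) = Suc N * d" "dim_col (calA d N A) = d"
  "dim_row (calB d m N A B) = Suc N * d" "dim_col (calB d m N A B) = N * m"
  "dim_row (calD d N A) = Suc N * d" "dim_col (calD d N A) = N * d"
  "dim_row (calQ d N Q Qf) = Suc N * d" "dim_col (calQ d N Q Qf) = Suc N * d"
  "dim_row (calR m N R) = N * m" "dim_col (calR m N R) = N * m"
  "dim_row (Smat m N \<kappa> \<nu> t \<omega>) = N * m" "dim_col (Smat m N \<kappa> \<nu> t \<omega>) = N * m"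
  "dim_vec (Phistack d N \<phi> w t \<omega>) = (N - 1) * d" "dim_vec (Wstack d N w t \<omega>) = N * d"
  by (simp_all add: calA_def calB_def calD_def calQ_def calR_def Smat_def Phistack_def Wstack_def del: mult_Suc)

lemma mv_idx: "i < dim_row A \<Longrightarrow> dim_vec v = dim_col A \<Longrightarrow> (A *\<^sub>v v) $ i = (\<Sum>j<dim_col A. A $$ (i,j) * v $ j)"
  by (simp add: scalar_prod_def atLeast0LessThan)

lemma ctrl_idx: assumes "\<eta> \<in> carrier_vec (N * m)" "\<Theta> \<in> carrier_mat (N * m) ((N - 1) * d)" "i < N * m"
  shows "ctrl d N \<phi> w t \<eta> \<Theta> \<omega> $ i = u \<eta> \<Theta> i \<omega>"
proof -
  have "(\<Theta> *\<^sub>v Phistack d N \<phi> w t \<omega>) $ i = (\<Sum>k<(N - 1) * d. \<Theta> $$ (i,k) * Phistack d N \<phi> w t \<omega> $ k)"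
    using assms by (subst mv_idx) auto
  also have "\<dots> = (\<Sum>k<(N - 1) * d. \<Theta> $$ (i,k) * ph k \<omega>)" by (simp add: Phi_idx)
  finally show ?thesis using assms unfolding ctrl_def u_def by simp
qed

lemma ctrl_dim: assumes "\<eta> \<in> carrier_vec (N * m)" "\<Theta> \<in> carrier_mat (N * m) ((N - 1) * d)"
  shows "dim_vec (ctrl d N \<phi> w t \<eta> \<Theta> \<omega>) = N * m"
  using assms unfolding ctrl_def by simp

lemma ua_idx: assumes "\<eta> \<in> carrier_vec (N * m)" "\<Theta> \<in> carrier_mat (N * m) ((N - 1) * d)" "i < N * m"
  shows "ctrl_applied d m N \<kappa> \<phi> w \<nu> t \<eta> \<Theta> \<omega> $ i = ua \<eta> \<Theta> i \<omega>"
proof -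
  have "ctrl_applied d m N \<kappa> \<phi> w \<nu> t \<eta> \<Theta> \<omega> $ i
     = (\<Sum>j<N * m. Smat m N \<kappa> \<nu> t \<omega> $$ (i,j) * ctrl d N \<phi> w t \<eta> \<Theta> \<omega> $ j)"
    unfolding ctrl_applied_def using assms by (subst mv_idx) (auto simp: ctrl_dim)
  also have "\<dots> = (\<Sum>j<N * m. if j = i then sv i \<omega> * ctrl d N \<phi> w t \<eta> \<Theta> \<omega> $ j else 0)"
    by (rule sum.cong[OF refl]) (use assms(3) in \<open>auto simp: Smat_idx\<close>)
  also have "\<dots> = ua \<eta> \<Theta> i \<omega>" using assms by (simp add: ctrl_idx ua_def)
  finally show ?thesis .
qed

lemma ua_dim: "dim_vec (ctrl_applied d m N \<kappa> \<phi> w \<nu> t \<eta> \<Theta> \<omega>) = N * m"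
  unfolding ctrl_applied_def by simp

lemma xs_idx: assumes "\<eta> \<in> carrier_vec (N * m)" "\<Theta> \<in> carrier_mat (N * m) ((N - 1) * d)" "a < Suc N * d"
    "x \<in> carrier_vec d"
  shows "state_stack d m N \<kappa> A B \<phi> w \<nu> t x \<eta> \<Theta> \<omega> $ a = xsv A B x \<eta> \<Theta> a \<omega>"
proof -
  have "(calB d m N A B *\<^sub>v ctrl_applied d m N \<kappa> \<phi> w \<nu> t \<eta> \<Theta> \<omega>) $ a
      = (\<Sum>i<N * m. calB d m N A B $$ (a,i) * ua \<eta> \<Theta> i \<omega>)"
    using assms by (subst mv_idx) (auto simp: ua_dim ua_idx)
  moreover have "(calD d N A *\<^sub>v Wstack d N w t \<omega>) $ a = (\<Sum>j<N * d. calD d N A $$ (a,j) * Wv j \<omega>)"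
    using assms by (subst mv_idx) (auto simp: W_idx)
  ultimately show ?thesis using assms unfolding state_stack_def xsv_def
    by simp
qed

lemma xs_dim: "dim_vec (state_stack d m N \<kappa> A B \<phi> w \<nu> t x \<eta> \<Theta> \<omega>) = Suc N * d"
  unfolding state_stack_def by (simp del: mult_Suc)

lemma stage_scalar: assumes "\<eta> \<in> carrier_vec (N * m)" "\<Theta> \<in> carrier_mat (N * m) ((N - 1) * d)"
    "x \<in> carrier_vec d"
  shows "stage_cost d m N \<kappa> A B Q Qf R \<phi> w \<nu> t x \<eta> \<Theta> \<omega> =
    (\<Sum>a<Suc N * d. xsv A B x \<eta> \<Theta> a \<omega> * (\<Sum>b<Suc N * d. calQ d N Q Qf $$ (a,b) * xsv A B x \<eta> \<Theta> b \<omega>))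
  + (\<Sum>i<N * m. ua \<eta> \<Theta> i \<omega> * (\<Sum>j<N * m. calR m N R $$ (i,j) * ua \<eta> \<Theta> j \<omega>))"
proof -
  have q: "\<And>a. a < Suc N * d \<Longrightarrow> (calQ d N Q Qf *\<^sub>v state_stack d m N \<kappa> A B \<phi> w \<nu> t x \<eta> \<Theta> \<omega>) $ a
     = (\<Sum>b<Suc N * d. calQ d N Q Qf $$ (a,b) * xsv A B x \<eta> \<Theta> b \<omega>)"
    using assms by (subst mv_idx) (auto simp: xs_dim xs_idx simp del: mult_Suc)
  have r: "\<And>i. i < N * m \<Longrightarrow> (calR m N R *\<^sub>v ctrl_applied d m N \<kappa> \<phi> w \<nu> t \<eta> \<Theta> \<omega>) $ i
     = (\<Sum>j<N * m. calR m N R $$ (i,j) * ua \<eta> \<Theta> j \<omega>)"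
    using assms by (subst mv_idx) (auto simp: ua_dim ua_idx)
  show ?thesis unfolding stage_cost_def Let_def scalar_prod_def
    using assms by (simp add: atLeast0LessThan xs_dim ua_dim q r xs_idx ua_idx del: mult_Suc index_mult_mat_vec)
qed


lemma int_dsum:
  fixes f :: "'i \<Rightarrow> 'j \<Rightarrow> 'w \<Rightarrow> real"
  assumes "finite I" "finite J" "\<And>i j. i \<in> I \<Longrightarrow> j \<in> J \<Longrightarrow> integrable M (f i j)"
  shows "integrable M (\<lambda>\<omega>. \<Sum>i\<in>I. \<Sum>j\<in>J. c i j * f i j \<omega>)"
    "(\<integral>\<omega>. (\<Sum>i\<in>I. \<Sum>j\<in>J. c i j * f i j \<omega>) \<partial>M) = (\<Sum>i\<in>I. \<Sum>j\<in>J. c i j * (\<integral>\<omega>. f i j \<omega> \<partial>M))"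
proof -
  show "integrable M (\<lambda>\<omega>. \<Sum>i\<in>I. \<Sum>j\<in>J. c i j * f i j \<omega>)"
    using assms(3) by (intro Bochner_Integration.integrable_sum integrable_mult_right) auto
  have "(\<integral>\<omega>. (\<Sum>i\<in>I. \<Sum>j\<in>J. c i j * f i j \<omega>) \<partial>M) = (\<Sum>i\<in>I. \<integral>\<omega>. (\<Sum>j\<in>J. c i j * f i j \<omega>) \<partial>M)"
    by (rule Bochner_Integration.integral_sum[where f="\<lambda>i \<omega>. \<Sum>j\<in>J. c i j * f i j \<omega>"])
       (use assms(3) in \<open>intro Bochner_Integration.integrable_sum integrable_mult_right, auto\<close>)
  also have "\<dots> = (\<Sum>i\<in>I. \<Sum>j\<in>J. c i j * (\<integral>\<omega>. f i j \<omega> \<partial>M))"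
  proof (rule sum.cong[OF refl])
    fix i assume i: "i \<in> I"
    show "(\<integral>\<omega>. (\<Sum>j\<in>J. c i j * f i j \<omega>) \<partial>M) = (\<Sum>j\<in>J. c i j * (\<integral>\<omega>. f i j \<omega> \<partial>M))"
      by (subst Bochner_Integration.integral_sum[where f="\<lambda>j \<omega>. c i j * f i j \<omega>"])
         (use i assms(3) in auto)
  qed
  finally show "(\<integral>\<omega>. (\<Sum>i\<in>I. \<Sum>j\<in>J. c i j * f i j \<omega>) \<partial>M) = (\<Sum>i\<in>I. \<Sum>j\<in>J. c i j * (\<integral>\<omega>. f i j \<omega> \<partial>M))" .
qed

lemma sqi_ua: "sqi (ua \<eta> \<Theta> i)"
  unfolding ua_def by (rule sqi_mult_bdd[OF sqi_sv sqi_u sv_bound])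

definition "Bu A B \<eta> \<Theta> a \<omega> = (\<Sum>i<N * m. calB d m N A B $$ (a,i) * ua \<eta> \<Theta> i \<omega>)"
definition "Dw A a \<omega> = (\<Sum>j<N * d. calD d N A $$ (a,j) * Wv j \<omega>)"

lemma sqi_Bu: "sqi (Bu A B \<eta> \<Theta> a)"
  unfolding Bu_def by (intro sqi_sum sqi_cmult sqi_ua) auto
lemma sqi_Dw: "sqi (Dw A a)"
  unfolding Dw_def by (intro sqi_sum sqi_cmult sqi_Wv) auto

lemma xsv_eq: "xsv A B x \<eta> \<Theta> a \<omega> = (calA d N A *\<^sub>v x) $ a + Bu A B \<eta> \<Theta> a \<omega> + Dw A a \<omega>"
  unfolding xsv_def Bu_def Dw_def by simp

lemma sqi_xsv: "sqi (xsv A B x \<eta> \<Theta> a)"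
  unfolding xsv_eq by (intro sqi_add sqi_const sqi_Bu sqi_Dw)

lemma E_Bu: "(\<integral>\<omega>. Bu A B \<eta> \<Theta> a \<omega> \<partial>M) = (\<Sum>i<N * m. calB d m N A B $$ (a,i) * ((\<integral>\<omega>. sv i \<omega> \<partial>M) * \<eta> $ i))"
  unfolding Bu_def using sqi_prod_int[OF sqi_ua sqi_const[of 1]]
  by (subst Bochner_Integration.integral_sum) (auto simp: ua_def E_su)

lemma E_Dw: "(\<integral>\<omega>. Dw A a \<omega> \<partial>M) = 0"
  unfolding Dw_def using Wv_int Wv_mean
  by (subst Bochner_Integration.integral_sum) auto

lemma E_uaua: "(\<integral>\<omega>. ua \<eta> \<Theta> i \<omega> * ua \<eta> \<Theta> j \<omega> \<partial>M) =
   (\<integral>\<omega>. sv i \<omega> * sv j \<omega> \<partial>M) * (\<integral>\<omega>. u \<eta> \<Theta> i \<omega> * u \<eta> \<Theta> j \<omega> \<partial>M)"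
  unfolding ua_def by (rule E_susu)

lemma E_uaW: "j < N * d \<Longrightarrow> (\<integral>\<omega>. ua \<eta> \<Theta> i \<omega> * Wv j \<omega> \<partial>M) =
   (\<integral>\<omega>. sv i \<omega> \<partial>M) * (\<integral>\<omega>. u \<eta> \<Theta> i \<omega> * Wv j \<omega> \<partial>M)"
  unfolding ua_def by (rule E_suW)

lemma E_BB: "(\<integral>\<omega>. Bu A B \<eta> \<Theta> a \<omega> * Bu A B \<eta> \<Theta> b \<omega> \<partial>M) =
  (\<Sum>i<N * m. \<Sum>j<N * m. (calB d m N A B $$ (a,i) * calB d m N A B $$ (b,j)) *
      ((\<integral>\<omega>. sv i \<omega> * sv j \<omega> \<partial>M) * (\<integral>\<omega>. u \<eta> \<Theta> i \<omega> * u \<eta> \<Theta> j \<omega> \<partial>M)))"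
proof -
  have e: "\<And>\<omega>. Bu A B \<eta> \<Theta> a \<omega> * Bu A B \<eta> \<Theta> b \<omega> = (\<Sum>i<N * m. \<Sum>j<N * m.
     (calB d m N A B $$ (a,i) * calB d m N A B $$ (b,j)) * (ua \<eta> \<Theta> i \<omega> * ua \<eta> \<Theta> j \<omega>))"
    unfolding Bu_def sum_product by (simp add: mult_ac)
  show ?thesis unfolding e
    by (subst int_dsum(2)) (auto simp: sqi_prod_int[OF sqi_ua sqi_ua] E_uaua)
qed

lemma E_BD: "(\<integral>\<omega>. Bu A B \<eta> \<Theta> a \<omega> * Dw A b \<omega> \<partial>M) =
  (\<Sum>i<N * m. \<Sum>j<N * d. (calB d m N A B $$ (a,i) * calD d N A $$ (b,j)) *
      ((\<integral>\<omega>. sv i \<omega> \<partial>M) * (\<integral>\<omega>. u \<eta> \<Theta> i \<omega> * Wv j \<omega> \<partial>M)))"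
proof -
  have e: "\<And>\<omega>. Bu A B \<eta> \<Theta> a \<omega> * Dw A b \<omega> = (\<Sum>i<N * m. \<Sum>j<N * d.
     (calB d m N A B $$ (a,i) * calD d N A $$ (b,j)) * (ua \<eta> \<Theta> i \<omega> * Wv j \<omega>))"
    unfolding Bu_def Dw_def sum_product by (simp add: mult_ac)
  show ?thesis unfolding e
    by (subst int_dsum(2)) (auto simp: sqi_prod_int[OF sqi_ua sqi_Wv] E_uaW)
qed

lemma E_DD: "(\<integral>\<omega>. Dw A a \<omega> * Dw A b \<omega> \<partial>M) =
  (\<Sum>i<N * d. \<Sum>j<N * d. (calD d N A $$ (a,i) * calD d N A $$ (b,j)) * (\<integral>\<omega>. Wv i \<omega> * Wv j \<omega> \<partial>M))"
proof -
  have e: "\<And>\<omega>. Dw A a \<omega> * Dw A b \<omega> = (\<Sum>i<N * d. \<Sum>j<N * d.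
     (calD d N A $$ (a,i) * calD d N A $$ (b,j)) * (Wv i \<omega> * Wv j \<omega>))"
    unfolding Dw_def sum_product by (simp add: mult_ac)
  show ?thesis unfolding e
    by (subst int_dsum(2)) (auto simp: sqi_prod_int[OF sqi_Wv sqi_Wv])
qed


lemma E_xx: "(\<integral>\<omega>. xsv A B x \<eta> \<Theta> a \<omega> * xsv A B x \<eta> \<Theta> b \<omega> \<partial>M) =
   (calA d N A *\<^sub>v x) $ a * (calA d N A *\<^sub>v x) $ b
 + (calA d N A *\<^sub>v x) $ a * (\<integral>\<omega>. Bu A B \<eta> \<Theta> b \<omega> \<partial>M)
 + (calA d N A *\<^sub>v x) $ b * (\<integral>\<omega>. Bu A B \<eta> \<Theta> a \<omega> \<partial>M)
 + (\<integral>\<omega>. Bu A B \<eta> \<Theta> a \<omega> * Bu A B \<eta> \<Theta> b \<omega> \<partial>M)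
 + (\<integral>\<omega>. Bu A B \<eta> \<Theta> a \<omega> * Dw A b \<omega> \<partial>M)
 + (\<integral>\<omega>. Bu A B \<eta> \<Theta> b \<omega> * Dw A a \<omega> \<partial>M)
 + (\<integral>\<omega>. Dw A a \<omega> * Dw A b \<omega> \<partial>M)"
proof -
  let ?a = "(calA d N A *\<^sub>v x) $ a" and ?b = "(calA d N A *\<^sub>v x) $ b"
  have e: "\<And>\<omega>. xsv A B x \<eta> \<Theta> a \<omega> * xsv A B x \<eta> \<Theta> b \<omega> =
    ?a * ?b + ?a * Bu A B \<eta> \<Theta> b \<omega> + ?a * Dw A b \<omega> + ?b * Bu A B \<eta> \<Theta> a \<omega> + ?b * Dw A a \<omega>
    + Bu A B \<eta> \<Theta> a \<omega> * Bu A B \<eta> \<Theta> b \<omega> + Bu A B \<eta> \<Theta> a \<omega> * Dw A b \<omega>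
    + Bu A B \<eta> \<Theta> b \<omega> * Dw A a \<omega> + Dw A a \<omega> * Dw A b \<omega>"
    unfolding xsv_eq by (simp add: algebra_simps)
  have i1: "\<And>a. integrable M (Bu A B \<eta> \<Theta> a)" using sqi_prod_int[OF sqi_Bu sqi_const[of 1]] by simp
  have i2: "\<And>a. integrable M (Dw A a)" using sqi_prod_int[OF sqi_Dw sqi_const[of 1]] by simp
  have i3: "\<And>a b. integrable M (\<lambda>\<omega>. Bu A B \<eta> \<Theta> a \<omega> * Bu A B \<eta> \<Theta> b \<omega>)"
    by (rule sqi_prod_int[OF sqi_Bu sqi_Bu])
  have i4: "\<And>a b. integrable M (\<lambda>\<omega>. Bu A B \<eta> \<Theta> a \<omega> * Dw A b \<omega>)"
    by (rule sqi_prod_int[OF sqi_Bu sqi_Dw])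
  have i5: "\<And>a b. integrable M (\<lambda>\<omega>. Dw A a \<omega> * Dw A b \<omega>)"
    by (rule sqi_prod_int[OF sqi_Dw sqi_Dw])
  show ?thesis unfolding e using i1 i2 i3 i4 i5 by (simp add: E_Dw prob_space)
qed

lemma E_stage: assumes "\<eta> \<in> carrier_vec (N * m)" "\<Theta> \<in> carrier_mat (N * m) ((N - 1) * d)"
    "x \<in> carrier_vec d"
  shows "integrable M (stage_cost d m N \<kappa> A B Q Qf R \<phi> w \<nu> t x \<eta> \<Theta>)"
    "(\<integral>\<omega>. stage_cost d m N \<kappa> A B Q Qf R \<phi> w \<nu> t x \<eta> \<Theta> \<omega> \<partial>M) =
    (\<Sum>a<Suc N * d. \<Sum>b<Suc N * d. calQ d N Q Qf $$ (a,b) * (\<integral>\<omega>. xsv A B x \<eta> \<Theta> a \<omega> * xsv A B x \<eta> \<Theta> b \<omega> \<partial>M))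
  + (\<Sum>i<N * m. \<Sum>j<N * m. calR m N R $$ (i,j) * (\<integral>\<omega>. ua \<eta> \<Theta> i \<omega> * ua \<eta> \<Theta> j \<omega> \<partial>M))"
proof -
  have e: "\<And>\<omega>. stage_cost d m N \<kappa> A B Q Qf R \<phi> w \<nu> t x \<eta> \<Theta> \<omega> =
    (\<Sum>a<Suc N * d. \<Sum>b<Suc N * d. calQ d N Q Qf $$ (a,b) * (xsv A B x \<eta> \<Theta> a \<omega> * xsv A B x \<eta> \<Theta> b \<omega>))
  + (\<Sum>i<N * m. \<Sum>j<N * m. calR m N R $$ (i,j) * (ua \<eta> \<Theta> i \<omega> * ua \<eta> \<Theta> j \<omega>))"
    unfolding stage_scalar[OF assms] by (simp add: sum_distrib_left mult_ac)
  have i1: "integrable M (\<lambda>\<omega>. \<Sum>a<Suc N * d. \<Sum>b<Suc N * d. calQ d N Q Qf $$ (a,b) * (xsv A B x \<eta> \<Theta> a \<omega> * xsv A B x \<eta> \<Theta> b \<omega>))"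
    by (rule int_dsum(1)) (auto intro: sqi_prod_int sqi_xsv)
  have i2: "integrable M (\<lambda>\<omega>. \<Sum>i<N * m. \<Sum>j<N * m. calR m N R $$ (i,j) * (ua \<eta> \<Theta> i \<omega> * ua \<eta> \<Theta> j \<omega>))"
    by (rule int_dsum(1)) (auto intro: sqi_prod_int sqi_ua)
  show "integrable M (stage_cost d m N \<kappa> A B Q Qf R \<phi> w \<nu> t x \<eta> \<Theta>)"
    unfolding e using i1 i2 by simp
  show "(\<integral>\<omega>. stage_cost d m N \<kappa> A B Q Qf R \<phi> w \<nu> t x \<eta> \<Theta> \<omega> \<partial>M) =
    (\<Sum>a<Suc N * d. \<Sum>b<Suc N * d. calQ d N Q Qf $$ (a,b) * (\<integral>\<omega>. xsv A B x \<eta> \<Theta> a \<omega> * xsv A B x \<eta> \<Theta> b \<omega> \<partial>M))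
  + (\<Sum>i<N * m. \<Sum>j<N * m. calR m N R $$ (i,j) * (\<integral>\<omega>. ua \<eta> \<Theta> i \<omega> * ua \<eta> \<Theta> j \<omega> \<partial>M))"
    unfolding e using i1 i2
    by (simp add: int_dsum(2)[where f="\<lambda>a b \<omega>. xsv A B x \<eta> \<Theta> a \<omega> * xsv A B x \<eta> \<Theta> b \<omega>"]
        int_dsum(2)[where f="\<lambda>a b \<omega>. ua \<eta> \<Theta> a \<omega> * ua \<eta> \<Theta> b \<omega>"] sqi_prod_int sqi_xsv sqi_ua
        del: mult_Suc)
qed


lemma mexp_idx: "i < nr \<Longrightarrow> j < nc \<Longrightarrow> mat_expect M nr nc F $$ (i,j) = (\<integral>\<omega>. F \<omega> $$ (i,j) \<partial>M)"
  unfolding mat_expect_def by simp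

lemma mexp_dim[simp]: "dim_row (mat_expect M nr nc F) = nr" "dim_col (mat_expect M nr nc F) = nc"
  unfolding mat_expect_def by simp_all

lemma muS_idx: "i < N * m \<Longrightarrow> j < N * m \<Longrightarrow>
  mat_expect M (N * m) (N * m) (Smat m N \<kappa> \<nu> t) $$ (i,j) = (if i = j then (\<integral>\<omega>. sv i \<omega> \<partial>M) else 0)"
  by (simp add: mexp_idx Smat_idx)

lemma SigS_idx: assumes "H \<in> carrier_mat (N * m) (N * m)" "i < N * m" "j < N * m"
  shows "mat_expect M (N * m) (N * m) (\<lambda>\<omega>. (Smat m N \<kappa> \<nu> t \<omega>)\<^sup>T * H * Smat m N \<kappa> \<nu> t \<omega>) $$ (i,j)
    = H $$ (i,j) * (\<integral>\<omega>. sv i \<omega> * sv j \<omega> \<partial>M)"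
proof -
  have e: "\<And>\<omega>. ((Smat m N \<kappa> \<nu> t \<omega>)\<^sup>T * H * Smat m N \<kappa> \<nu> t \<omega>) $$ (i,j) = H $$ (i,j) * (sv i \<omega> * sv j \<omega>)"
  proof -
    fix \<omega>
    have "((Smat m N \<kappa> \<nu> t \<omega>)\<^sup>T * H * Smat m N \<kappa> \<nu> t \<omega>) $$ (i,j)
       = (\<Sum>k<N * m. ((Smat m N \<kappa> \<nu> t \<omega>)\<^sup>T * H) $$ (i,k) * Smat m N \<kappa> \<nu> t \<omega> $$ (k,j))"
      using assms by (simp add: scalar_prod_def atLeast0LessThan)
    also have "\<dots> = ((Smat m N \<kappa> \<nu> t \<omega>)\<^sup>T * H) $$ (i,j) * sv j \<omega>"
      using assms by (simp add: Smat_idx if_distrib cong: if_cong)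
    also have "((Smat m N \<kappa> \<nu> t \<omega>)\<^sup>T * H) $$ (i,j) = (\<Sum>k<N * m. Smat m N \<kappa> \<nu> t \<omega> $$ (k,i) * H $$ (k,j))"
      using assms by (simp add: scalar_prod_def atLeast0LessThan)
    also have "\<dots> = (\<Sum>k<N * m. if k = i then sv i \<omega> * H $$ (i,j) else 0)"
      by (rule sum.cong[OF refl]) (use assms in \<open>auto simp: Smat_idx\<close>)
    also have "\<dots> = sv i \<omega> * H $$ (i,j)"
      using assms by simp
    finally show "?thesis \<omega>" by (simp add: mult_ac)
  qed
  show ?thesis using assms by (simp add: mexp_idx e)
qed

lemma outer_idx: "i < dim_vec v \<Longrightarrow> j < dim_vec u' \<Longrightarrow> outer v u' $$ (i,j) = v $ i * u' $ j"
  unfolding outer_def by simp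

lemma Sp_idx: "k < (N - 1) * d \<Longrightarrow> l < (N - 1) * d \<Longrightarrow>
  mat_expect M ((N - 1) * d) ((N - 1) * d) (\<lambda>\<omega>. outer (Phistack d N \<phi> w t \<omega>) (Phistack d N \<phi> w t \<omega>)) $$ (k,l)
  = (\<integral>\<omega>. ph k \<omega> * ph l \<omega> \<partial>M)"
  by (simp add: mexp_idx outer_idx Phi_idx)

lemma Swp_idx: "j < N * d \<Longrightarrow> l < (N - 1) * d \<Longrightarrow>
  mat_expect M (N * d) ((N - 1) * d) (\<lambda>\<omega>. outer (Wstack d N w t \<omega>) (Phistack d N \<phi> w t \<omega>)) $$ (j,l)
  = (\<integral>\<omega>. Wv j \<omega> * ph l \<omega> \<partial>M)"
  by (simp add: mexp_idx outer_idx Phi_idx W_idx)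

lemma Sww_idx: "i < N * d \<Longrightarrow> j < N * d \<Longrightarrow>
  mat_expect M (N * d) (N * d) (\<lambda>\<omega>. outer (Wstack d N w t \<omega>) (Wstack d N w t \<omega>)) $$ (i,j)
  = (\<integral>\<omega>. Wv i \<omega> * Wv j \<omega> \<partial>M)"
  by (simp add: mexp_idx outer_idx W_idx)


lemma sum_sym_swap: fixes F :: "nat \<Rightarrow> nat \<Rightarrow> real"
  assumes "\<And>a b. a < nb \<Longrightarrow> b < nb \<Longrightarrow> C b a = C a b"
  shows "(\<Sum>a<nb. \<Sum>b<nb. C a b * F b a) = (\<Sum>a<nb. \<Sum>b<nb. C a b * F a b)"
proof -
  have "(\<Sum>a<nb. \<Sum>b<nb. C a b * F b a) = (\<Sum>b<nb. \<Sum>a<nb. C a b * F b a)" by (rule sum.swap)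
  also have "\<dots> = (\<Sum>b<nb. \<Sum>a<nb. C b a * F b a)" using assms by (intro sum.cong refl) auto
  finally show ?thesis .
qed

lemma calQ_sym: assumes "Q \<in> carrier_mat d d" "Qf \<in> carrier_mat d d" "Q\<^sup>T = Q" "Qf\<^sup>T = Qf"
  "a < Suc N * d" "b < Suc N * d"
  shows "calQ d N Q Qf $$ (b,a) = calQ d N Q Qf $$ (a,b)"
proof -
  have d: "0 < d" using assms(5) by (cases d) auto
  have sQ: "\<And>i j. i < d \<Longrightarrow> j < d \<Longrightarrow> Q $$ (j,i) = Q $$ (i,j)"
    using assms(1,3) by (metis carrier_matD(1) carrier_matD(2) index_transpose_mat(1))
  have sQf: "\<And>i j. i < d \<Longrightarrow> j < d \<Longrightarrow> Qf $$ (j,i) = Qf $$ (i,j)"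
    using assms(2,4) by (metis carrier_matD(1) carrier_matD(2) index_transpose_mat(1))
  show ?thesis unfolding calQ_def using assms(5,6) d sQ sQf by auto
qed

lemma E_final: assumes eta: "\<eta> \<in> carrier_vec (N * m)" and Th: "\<Theta> \<in> carrier_mat (N * m) ((N - 1) * d)"
    and x: "x \<in> carrier_vec d"
    and Qc: "Q \<in> carrier_mat d d" "Qf \<in> carrier_mat d d" "Q\<^sup>T = Q" "Qf\<^sup>T = Qf"
    and Rc: "R \<in> carrier_mat m m"
  shows "(\<integral>\<omega>. stage_cost d m N \<kappa> A B Q Qf R \<phi> w \<nu> t x \<eta> \<Theta> \<omega> \<partial>M)
     = tractable_obj M d m N \<kappa> A B Q Qf R \<phi> w \<nu> t x \<eta> \<Theta>"
proof -
  define nb where "nb = Suc N * d"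
  define n where "n = N * m"
  define q where "q = (N - 1) * d"
  define r where "r = N * d"
  define cA where "cA = calA d N A"
  define cB where "cB = calB d m N A B"
  define cD where "cD = calD d N A"
  define cQ where "cQ = calQ d N Q Qf"
  define cR where "cR = calR m N R"
  define muS where "muS = mat_expect M (N * m) (N * m) (Smat m N \<kappa> \<nu> t)"
  define SigS where "SigS = mat_expect M (N * m) (N * m)
                  (\<lambda>\<omega>. (Smat m N \<kappa> \<nu> t \<omega>)\<^sup>T * (cB\<^sup>T * cQ * cB + cR) * Smat m N \<kappa> \<nu> t \<omega>)"
  define SigPhi where "SigPhi = mat_expect M ((N - 1) * d) ((N - 1) * d)
                  (\<lambda>\<omega>. outer (Phistack d N \<phi> w t \<omega>) (Phistack d N \<phi> w t \<omega>))"
  define SigPhi' where "SigPhi' = mat_expect M (N * d) ((N - 1) * d)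
                  (\<lambda>\<omega>. outer (Wstack d N w t \<omega>) (Phistack d N \<phi> w t \<omega>))"
  define SigW where "SigW = mat_expect M (N * d) (N * d)
                  (\<lambda>\<omega>. outer (Wstack d N w t \<omega>) (Wstack d N w t \<omega>))"
  define Ms where "Ms i = (\<integral>\<omega>. sv i \<omega> \<partial>M)" for i
  define Mss where "Mss i j = (\<integral>\<omega>. sv i \<omega> * sv j \<omega> \<partial>M)" for i j
  define Epp where "Epp k l = (\<integral>\<omega>. ph k \<omega> * ph l \<omega> \<partial>M)" for k l
  define Ewp where "Ewp j k = (\<integral>\<omega>. Wv j \<omega> * ph k \<omega> \<partial>M)" for j k
  define Eww where "Eww i j = (\<integral>\<omega>. Wv i \<omega> * Wv j \<omega> \<partial>M)" for i j
  define al where "al a = (cA *\<^sub>v x) $ a" for a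
  have cAc: "cA \<in> carrier_mat nb d" and cBc: "cB \<in> carrier_mat nb n" and cDc: "cD \<in> carrier_mat nb r"
    and cQc: "cQ \<in> carrier_mat nb nb" and cRc: "cR \<in> carrier_mat n n"
    unfolding cA_def cB_def cD_def cQ_def cR_def nb_def n_def r_def by (auto simp del: mult_Suc)
  have muc: "muS \<in> carrier_mat n n" and SSc: "SigS \<in> carrier_mat n n" and SPc: "SigPhi \<in> carrier_mat q q"
    and SP'c: "SigPhi' \<in> carrier_mat r q" and SWc: "SigW \<in> carrier_mat r r"
    unfolding muS_def SigS_def SigPhi_def SigPhi'_def SigW_def n_def q_def r_def by auto
  have Thc: "\<Theta> \<in> carrier_mat n q" and etac: "\<eta> \<in> carrier_vec n" using Th eta unfolding n_def q_def by auto
  have mue: "\<And>i j. i < n \<Longrightarrow> j < n \<Longrightarrow> muS $$ (i,j) = (if i = j then Ms i else 0)"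
    unfolding muS_def Ms_def n_def by (rule muS_idx)
  have sse: "\<And>i j. i < n \<Longrightarrow> j < n \<Longrightarrow> SigS $$ (i,j) = ((cB\<^sup>T * cQ * cB) $$ (i,j) + cR $$ (i,j)) * Mss i j"
  proof -
    fix i j assume i: "i < n" and j: "j < n"
    have H: "cB\<^sup>T * cQ * cB + cR \<in> carrier_mat (N * m) (N * m)" using cBc cQc cRc unfolding n_def by auto
    show "SigS $$ (i,j) = ((cB\<^sup>T * cQ * cB) $$ (i,j) + cR $$ (i,j)) * Mss i j"
      unfolding SigS_def Mss_def using SigS_idx[OF H] i j cBc cQc cRc unfolding n_def by simp
  qed
  have spe: "\<And>k l. k < q \<Longrightarrow> l < q \<Longrightarrow> SigPhi $$ (k,l) = Epp k l"
    unfolding SigPhi_def Epp_def q_def by (rule Sp_idx)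
  have spe': "\<And>j l. j < r \<Longrightarrow> l < q \<Longrightarrow> SigPhi' $$ (j,l) = Ewp j l"
    unfolding SigPhi'_def Ewp_def q_def r_def by (rule Swp_idx)
  have swe: "\<And>i j. i < r \<Longrightarrow> j < r \<Longrightarrow> SigW $$ (i,j) = Eww i j"
    unfolding SigW_def Eww_def r_def by (rule Sww_idx)
  have Eppsym: "\<And>k l. Epp k l = Epp l k" unfolding Epp_def by (simp add: mult.commute)
  have Ewwsym: "\<And>k l. Eww k l = Eww l k" unfolding Eww_def by (simp add: mult.commute)
  have Qsym: "\<And>a b. a < nb \<Longrightarrow> b < nb \<Longrightarrow> cQ $$ (b,a) = cQ $$ (a,b)"
    unfolding cQ_def nb_def using calQ_sym[OF Qc] by blast
  define EBu where "EBu a = (\<Sum>i<n. cB $$ (a,i) * (Ms i * \<eta> $ i))" for a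
  define Uu where "Uu i j = \<eta> $ i * \<eta> $ j + (\<Sum>k<q. \<Sum>l<q. \<Theta> $$ (i,k) * \<Theta> $$ (j,l) * Epp k l)" for i j
  define EBB where "EBB a b = (\<Sum>i<n. \<Sum>j<n. (cB $$ (a,i) * cB $$ (b,j)) * (Mss i j * Uu i j))" for a b
  define EBD where "EBD a b = (\<Sum>i<n. \<Sum>j<r. (cB $$ (a,i) * cD $$ (b,j)) * (Ms i * (\<Sum>k<q. \<Theta> $$ (i,k) * Ewp j k)))" for a b
  define EDD where "EDD a b = (\<Sum>i<r. \<Sum>j<r. (cD $$ (a,i) * cD $$ (b,j)) * Eww i j)" for a b
  have xx: "\<And>a b. (\<integral>\<omega>. xsv A B x \<eta> \<Theta> a \<omega> * xsv A B x \<eta> \<Theta> b \<omega> \<partial>M)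
     = al a * al b + al a * EBu b + al b * EBu a + EBB a b + EBD a b + EBD b a + EDD a b"
    unfolding E_xx E_Bu E_BB E_BD E_DD
    by (simp add: al_def cA_def EBu_def EBB_def EBD_def EDD_def Ms_def Mss_def Uu_def E_uu E_uW Epp_def Ewp_def
        Eww_def n_def q_def r_def cB_def cD_def)
  have uu: "\<And>i j. (\<integral>\<omega>. ua \<eta> \<Theta> i \<omega> * ua \<eta> \<Theta> j \<omega> \<partial>M) = Mss i j * Uu i j"
    unfolding E_uaua E_uu Mss_def Uu_def Epp_def q_def by simp
  have LHS: "(\<integral>\<omega>. stage_cost d m N \<kappa> A B Q Qf R \<phi> w \<nu> t x \<eta> \<Theta> \<omega> \<partial>M) =
     (\<Sum>a<nb. \<Sum>b<nb. cQ $$ (a,b) * (al a * al b + al a * EBu b + al b * EBu a + EBB a b + EBD a b + EBD b a + EDD a b))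
     + (\<Sum>i<n. \<Sum>j<n. cR $$ (i,j) * (Mss i j * Uu i j))"
    unfolding E_stage(2)[OF eta Th x] xx uu nb_def n_def cQ_def cR_def by simp
  have split: "(\<Sum>a<nb. \<Sum>b<nb. cQ $$ (a,b) * (al a * al b + al a * EBu b + al b * EBu a + EBB a b + EBD a b + EBD b a + EDD a b))
     = (\<Sum>a<nb. \<Sum>b<nb. cQ $$ (a,b) * (al a * al b)) + 2 * (\<Sum>a<nb. \<Sum>b<nb. cQ $$ (a,b) * (al a * EBu b))
       + (\<Sum>a<nb. \<Sum>b<nb. cQ $$ (a,b) * EBB a b) + 2 * (\<Sum>a<nb. \<Sum>b<nb. cQ $$ (a,b) * EBD a b)
       + (\<Sum>a<nb. \<Sum>b<nb. cQ $$ (a,b) * EDD a b)"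
  proof -
    have s1: "(\<Sum>a<nb. \<Sum>b<nb. cQ $$ (a,b) * (al b * EBu a)) = (\<Sum>a<nb. \<Sum>b<nb. cQ $$ (a,b) * (al a * EBu b))"
      by (rule sum_sym_swap[where F="\<lambda>a b. al a * EBu b" and C="\<lambda>a b. cQ $$ (a,b)"]) (rule Qsym)
    have s2: "(\<Sum>a<nb. \<Sum>b<nb. cQ $$ (a,b) * EBD b a) = (\<Sum>a<nb. \<Sum>b<nb. cQ $$ (a,b) * EBD a b)"
      by (rule sum_sym_swap[where F="\<lambda>a b. EBD a b" and C="\<lambda>a b. cQ $$ (a,b)"]) (rule Qsym)
    show ?thesis using s1 s2 by (simp add: distrib_left sum.distrib)
  qed
  have ta: "(\<Sum>a<nb. \<Sum>b<nb. cQ $$ (a,b) * (al a * al b)) = x \<bullet> ((cA\<^sup>T * cQ * cA) *\<^sub>v x)"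
    unfolding al_def by (rule Ta[OF cAc cQc x])
  have tb: "(\<Sum>a<nb. \<Sum>b<nb. cQ $$ (a,b) * (al a * EBu b)) = x \<bullet> ((cA\<^sup>T * cQ * cB * muS) *\<^sub>v \<eta>)"
    unfolding al_def EBu_def by (rule Tb[OF cAc cQc x cBc muc mue etac])
  have tc: "(\<Sum>a<nb. \<Sum>b<nb. cQ $$ (a,b) * EBB a b) + (\<Sum>i<n. \<Sum>j<n. cR $$ (i,j) * (Mss i j * Uu i j))
     = \<eta> \<bullet> (SigS *\<^sub>v \<eta>) + mtrace (\<Theta>\<^sup>T * SigS * \<Theta> * SigPhi)"
    unfolding EBB_def Uu_def by (rule Tc[OF cBc cQc cRc SSc SPc Thc etac sse spe Eppsym])
  have td: "(\<Sum>a<nb. \<Sum>b<nb. cQ $$ (a,b) * EBD a b) = mtrace (\<Theta>\<^sup>T * muS\<^sup>T * cB\<^sup>T * cQ * cD * SigPhi')"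
    unfolding EBD_def by (rule Td[OF cBc cQc cDc muc SP'c Thc mue spe'])
  have te: "(\<Sum>a<nb. \<Sum>b<nb. cQ $$ (a,b) * EDD a b) = mtrace (cD\<^sup>T * cQ * cD * SigW)"
    unfolding EDD_def by (rule Te[OF cDc cQc SWc swe Ewwsym])
  have RHS: "tractable_obj M d m N \<kappa> A B Q Qf R \<phi> w \<nu> t x \<eta> \<Theta> =
      2 * mtrace (\<Theta>\<^sup>T * muS\<^sup>T * cB\<^sup>T * cQ * cD * SigPhi')
        + 2 * (x \<bullet> ((cA\<^sup>T * cQ * cB * muS) *\<^sub>v \<eta>))
        + \<eta> \<bullet> (SigS *\<^sub>v \<eta>)
        + mtrace (\<Theta>\<^sup>T * SigS * \<Theta> * SigPhi)
        + (x \<bullet> ((cA\<^sup>T * cQ * cA) *\<^sub>v x) + mtrace (cD\<^sup>T * cQ * cD * SigW))"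
    unfolding tractable_obj_def Let_def cA_def cB_def cD_def cQ_def cR_def muS_def SigS_def SigPhi_def SigPhi'_def SigW_def
    by simp
  show ?thesis unfolding LHS split RHS using ta tb tc td te by simp
qed


lemma lin_sum: "(\<Sum>i\<in>I. l * f i + c * g i) = l * (\<Sum>i\<in>I. f i) + c * (\<Sum>i\<in>I. (g i :: real))"
  by (simp add: sum.distrib sum_distrib_left)

lemma bil_cong: "(\<And>a. a < n \<Longrightarrow> f a = f' a) \<Longrightarrow> bil C n f f = bil C n f' f'"
  unfolding bil_def by (intro sum.cong refl) auto

lemma u_comb: assumes "\<eta>1 \<in> carrier_vec (N * m)" "\<eta>2 \<in> carrier_vec (N * m)"
   "\<Theta>1 \<in> carrier_mat (N * m) ((N - 1) * d)" "\<Theta>2 \<in> carrier_mat (N * m) ((N - 1) * d)" "i < N * m"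
  shows "u (l \<cdot>\<^sub>v \<eta>1 + (1 - l) \<cdot>\<^sub>v \<eta>2) (l \<cdot>\<^sub>m \<Theta>1 + (1 - l) \<cdot>\<^sub>m \<Theta>2) i \<omega>
     = l * u \<eta>1 \<Theta>1 i \<omega> + (1 - l) * u \<eta>2 \<Theta>2 i \<omega>"
proof -
  have "(\<Sum>k<(N - 1) * d. (l \<cdot>\<^sub>m \<Theta>1 + (1 - l) \<cdot>\<^sub>m \<Theta>2) $$ (i,k) * ph k \<omega>)
      = (\<Sum>k<(N - 1) * d. l * (\<Theta>1 $$ (i,k) * ph k \<omega>) + (1 - l) * (\<Theta>2 $$ (i,k) * ph k \<omega>))"
    using assms by (intro sum.cong refl) (auto simp: algebra_simps)
  then show ?thesis unfolding u_def lin_sum using assms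
    by (simp add: algebra_simps)
qed

lemma xsv_comb: assumes "\<eta>1 \<in> carrier_vec (N * m)" "\<eta>2 \<in> carrier_vec (N * m)"
   "\<Theta>1 \<in> carrier_mat (N * m) ((N - 1) * d)" "\<Theta>2 \<in> carrier_mat (N * m) ((N - 1) * d)"
  shows "xsv A B x (l \<cdot>\<^sub>v \<eta>1 + (1 - l) \<cdot>\<^sub>v \<eta>2) (l \<cdot>\<^sub>m \<Theta>1 + (1 - l) \<cdot>\<^sub>m \<Theta>2) a \<omega>
     = l * xsv A B x \<eta>1 \<Theta>1 a \<omega> + (1 - l) * xsv A B x \<eta>2 \<Theta>2 a \<omega>"
proof -
  have "(\<Sum>i<N * m. calB d m N A B $$ (a,i) * ua (l \<cdot>\<^sub>v \<eta>1 + (1 - l) \<cdot>\<^sub>v \<eta>2) (l \<cdot>\<^sub>m \<Theta>1 + (1 - l) \<cdot>\<^sub>m \<Theta>2) i \<omega>)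
     = (\<Sum>i<N * m. l * (calB d m N A B $$ (a,i) * ua \<eta>1 \<Theta>1 i \<omega>) + (1 - l) * (calB d m N A B $$ (a,i) * ua \<eta>2 \<Theta>2 i \<omega>))"
    using assms by (intro sum.cong refl) (auto simp: ua_def u_comb algebra_simps)
  then have Bs: "(\<Sum>i<N * m. calB d m N A B $$ (a,i) * ua (l \<cdot>\<^sub>v \<eta>1 + (1 - l) \<cdot>\<^sub>v \<eta>2) (l \<cdot>\<^sub>m \<Theta>1 + (1 - l) \<cdot>\<^sub>m \<Theta>2) i \<omega>)
     = l * (\<Sum>i<N * m. calB d m N A B $$ (a,i) * ua \<eta>1 \<Theta>1 i \<omega>) + (1 - l) * (\<Sum>i<N * m. calB d m N A B $$ (a,i) * ua \<eta>2 \<Theta>2 i \<omega>)"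
    by (simp only: lin_sum)
  show ?thesis unfolding xsv_def Bs by (simp add: algebra_simps)
qed

lemma stage_bil: assumes "\<eta> \<in> carrier_vec (N * m)" "\<Theta> \<in> carrier_mat (N * m) ((N - 1) * d)" "x \<in> carrier_vec d"
  shows "stage_cost d m N \<kappa> A B Q Qf R \<phi> w \<nu> t x \<eta> \<Theta> \<omega> =
     bil (\<lambda>a b. calQ d N Q Qf $$ (a,b)) (Suc N * d) (\<lambda>a. xsv A B x \<eta> \<Theta> a \<omega>) (\<lambda>a. xsv A B x \<eta> \<Theta> a \<omega>)
   + bil (\<lambda>a b. calR m N R $$ (a,b)) (N * m) (\<lambda>a. ua \<eta> \<Theta> a \<omega>) (\<lambda>a. ua \<eta> \<Theta> a \<omega>)"
  unfolding stage_scalar[OF assms] bil_def by simp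

lemma stage_comb: assumes "\<eta>1 \<in> carrier_vec (N * m)" "\<eta>2 \<in> carrier_vec (N * m)"
   "\<Theta>1 \<in> carrier_mat (N * m) ((N - 1) * d)" "\<Theta>2 \<in> carrier_mat (N * m) ((N - 1) * d)"
   "x \<in> carrier_vec d" "0 \<le> l" "l \<le> 1"
   and Qp: "\<And>v. 0 \<le> bil (\<lambda>a b. calQ d N Q Qf $$ (a,b)) (Suc N * d) v v"
   and Rp: "\<And>v. 0 \<le> bil (\<lambda>a b. calR m N R $$ (a,b)) (N * m) v v"
  shows "stage_cost d m N \<kappa> A B Q Qf R \<phi> w \<nu> t x (l \<cdot>\<^sub>v \<eta>1 + (1 - l) \<cdot>\<^sub>v \<eta>2) (l \<cdot>\<^sub>m \<Theta>1 + (1 - l) \<cdot>\<^sub>m \<Theta>2) \<omega>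
     \<le> l * stage_cost d m N \<kappa> A B Q Qf R \<phi> w \<nu> t x \<eta>1 \<Theta>1 \<omega> + (1 - l) * stage_cost d m N \<kappa> A B Q Qf R \<phi> w \<nu> t x \<eta>2 \<Theta>2 \<omega>"
proof -
  let ?e = "l \<cdot>\<^sub>v \<eta>1 + (1 - l) \<cdot>\<^sub>v \<eta>2" and ?T = "l \<cdot>\<^sub>m \<Theta>1 + (1 - l) \<cdot>\<^sub>m \<Theta>2"
  have ec: "?e \<in> carrier_vec (N * m)" using assms by auto
  have Tc: "?T \<in> carrier_mat (N * m) ((N - 1) * d)" using assms by auto
  let ?CQ = "\<lambda>a b. calQ d N Q Qf $$ (a,b)" and ?CR = "\<lambda>a b. calR m N R $$ (a,b)"
  have x: "(\<lambda>a. xsv A B x ?e ?T a \<omega>) = (\<lambda>a. l * xsv A B x \<eta>1 \<Theta>1 a \<omega> + (1 - l) * xsv A B x \<eta>2 \<Theta>2 a \<omega>)"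
    using xsv_comb[OF assms(1-4)] by auto
  have uu: "bil ?CR (N * m) (\<lambda>a. ua ?e ?T a \<omega>) (\<lambda>a. ua ?e ?T a \<omega>)
      = bil ?CR (N * m) (\<lambda>a. l * ua \<eta>1 \<Theta>1 a \<omega> + (1 - l) * ua \<eta>2 \<Theta>2 a \<omega>) (\<lambda>a. l * ua \<eta>1 \<Theta>1 a \<omega> + (1 - l) * ua \<eta>2 \<Theta>2 a \<omega>)"
    by (rule bil_cong) (use assms in \<open>simp add: ua_def u_comb algebra_simps\<close>)
  have q: "bil ?CQ (Suc N * d) (\<lambda>a. xsv A B x ?e ?T a \<omega>) (\<lambda>a. xsv A B x ?e ?T a \<omega>)
     \<le> l * bil ?CQ (Suc N * d) (\<lambda>a. xsv A B x \<eta>1 \<Theta>1 a \<omega>) (\<lambda>a. xsv A B x \<eta>1 \<Theta>1 a \<omega>)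
       + (1 - l) * bil ?CQ (Suc N * d) (\<lambda>a. xsv A B x \<eta>2 \<Theta>2 a \<omega>) (\<lambda>a. xsv A B x \<eta>2 \<Theta>2 a \<omega>)"
    unfolding x by (rule quad_convex[OF Qp assms(6,7)])
  have r: "bil ?CR (N * m) (\<lambda>a. ua ?e ?T a \<omega>) (\<lambda>a. ua ?e ?T a \<omega>)
     \<le> l * bil ?CR (N * m) (\<lambda>a. ua \<eta>1 \<Theta>1 a \<omega>) (\<lambda>a. ua \<eta>1 \<Theta>1 a \<omega>)
       + (1 - l) * bil ?CR (N * m) (\<lambda>a. ua \<eta>2 \<Theta>2 a \<omega>) (\<lambda>a. ua \<eta>2 \<Theta>2 a \<omega>)"
    unfolding uu by (rule quad_convex[OF Rp assms(6,7)])
  show ?thesis unfolding stage_bil[OF ec Tc assms(5)] stage_bil[OF assms(1,3,5)] stage_bil[OF assms(2,4,5)]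
    using q r by (simp add: algebra_simps)
qed

lemma ctrl_comb: assumes "\<eta>1 \<in> carrier_vec (N * m)" "\<eta>2 \<in> carrier_vec (N * m)"
   "\<Theta>1 \<in> carrier_mat (N * m) ((N - 1) * d)" "\<Theta>2 \<in> carrier_mat (N * m) ((N - 1) * d)" "i < N * m"
  shows "ctrl d N \<phi> w t (l \<cdot>\<^sub>v \<eta>1 + (1 - l) \<cdot>\<^sub>v \<eta>2) (l \<cdot>\<^sub>m \<Theta>1 + (1 - l) \<cdot>\<^sub>m \<Theta>2) \<omega> $ i
    = l * ctrl d N \<phi> w t \<eta>1 \<Theta>1 \<omega> $ i + (1 - l) * ctrl d N \<phi> w t \<eta>2 \<Theta>2 \<omega> $ i"
proof -
  have ec: "l \<cdot>\<^sub>v \<eta>1 + (1 - l) \<cdot>\<^sub>v \<eta>2 \<in> carrier_vec (N * m)" using assms by auto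
  have Tc: "l \<cdot>\<^sub>m \<Theta>1 + (1 - l) \<cdot>\<^sub>m \<Theta>2 \<in> carrier_mat (N * m) ((N - 1) * d)" using assms by auto
  show ?thesis using ctrl_idx[OF ec Tc assms(5)] ctrl_idx[OF assms(1,3,5)] ctrl_idx[OF assms(2,4,5)] u_comb[OF assms]
    by simp
qed

lemma convex_main:
  assumes x: "x \<in> carrier_vec d"
   and Qp: "\<And>v. 0 \<le> bil (\<lambda>a b. calQ d N Q Qf $$ (a,b)) (Suc N * d) v v"
   and Rp: "\<And>v. 0 \<le> bil (\<lambda>a b. calR m N R $$ (a,b)) (N * m) v v"
  shows "convex_problem (feasible_set M d m N Umax \<phi> w t)
        (\<lambda>(\<eta>, \<Theta>). \<integral>\<omega>. stage_cost d m N \<kappa> A B Q Qf R \<phi> w \<nu> t x \<eta> \<Theta> \<omega> \<partial>M)"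
  unfolding convex_problem_def
proof (intro ballI allI impI conjI)
  fix a b and l :: real
  assume aF: "a \<in> feasible_set M d m N Umax \<phi> w t" and bF: "b \<in> feasible_set M d m N Umax \<phi> w t"
    and l: "0 \<le> l \<and> l \<le> 1"
  obtain \<eta>1 \<Theta>1 where a: "a = (\<eta>1, \<Theta>1)" by (cases a)
  obtain \<eta>2 \<Theta>2 where b: "b = (\<eta>2, \<Theta>2)" by (cases b)
  have e1: "\<eta>1 \<in> carrier_vec (N * m)" and T1: "\<Theta>1 \<in> carrier_mat (N * m) ((N - 1) * d)"
    and s1: "strict_lower_block d m N \<Theta>1"
    and AE1: "AE \<omega> in M. \<forall>i < N * m. \<bar>ctrl d N \<phi> w t \<eta>1 \<Theta>1 \<omega> $ i\<bar> \<le> Umax"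
    using aF a unfolding feasible_set_def by auto
  have e2: "\<eta>2 \<in> carrier_vec (N * m)" and T2: "\<Theta>2 \<in> carrier_mat (N * m) ((N - 1) * d)"
    and s2: "strict_lower_block d m N \<Theta>2"
    and AE2: "AE \<omega> in M. \<forall>i < N * m. \<bar>ctrl d N \<phi> w t \<eta>2 \<Theta>2 \<omega> $ i\<bar> \<le> Umax"
    using bF b unfolding feasible_set_def by auto
  let ?e = "l \<cdot>\<^sub>v \<eta>1 + (1 - l) \<cdot>\<^sub>v \<eta>2" and ?T = "l \<cdot>\<^sub>m \<Theta>1 + (1 - l) \<cdot>\<^sub>m \<Theta>2"
  have c: "comb l a b = (?e, ?T)" unfolding comb_def a b by simp
  have ec: "?e \<in> carrier_vec (N * m)" using e1 e2 by auto
  have Tc: "?T \<in> carrier_mat (N * m) ((N - 1) * d)" using T1 T2 by auto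
  have sc: "strict_lower_block d m N ?T"
    using s1 s2 T1 T2 unfolding strict_lower_block_def by auto
  have AEc: "AE \<omega> in M. \<forall>i < N * m. \<bar>ctrl d N \<phi> w t ?e ?T \<omega> $ i\<bar> \<le> Umax"
    using AE1 AE2
  proof eventually_elim
    case (elim \<omega>)
    show ?case
    proof (intro allI impI)
      fix i assume i: "i < N * m"
      have "\<bar>ctrl d N \<phi> w t ?e ?T \<omega> $ i\<bar> = \<bar>l * ctrl d N \<phi> w t \<eta>1 \<Theta>1 \<omega> $ i + (1 - l) * ctrl d N \<phi> w t \<eta>2 \<Theta>2 \<omega> $ i\<bar>"
        by (simp add: ctrl_comb[OF e1 e2 T1 T2 i])
      also have "\<dots> \<le> l * \<bar>ctrl d N \<phi> w t \<eta>1 \<Theta>1 \<omega> $ i\<bar> + (1 - l) * \<bar>ctrl d N \<phi> w t \<eta>2 \<Theta>2 \<omega> $ i\<bar>"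
      proof -
        have "\<bar>l * ctrl d N \<phi> w t \<eta>1 \<Theta>1 \<omega> $ i + (1 - l) * ctrl d N \<phi> w t \<eta>2 \<Theta>2 \<omega> $ i\<bar>
           \<le> \<bar>l * ctrl d N \<phi> w t \<eta>1 \<Theta>1 \<omega> $ i\<bar> + \<bar>(1 - l) * ctrl d N \<phi> w t \<eta>2 \<Theta>2 \<omega> $ i\<bar>"
          by (rule abs_triangle_ineq)
        then show ?thesis using l by (simp add: abs_mult)
      qed
      also have "\<dots> \<le> l * Umax + (1 - l) * Umax"
        using l elim i by (intro add_mono mult_left_mono) auto
      finally show "\<bar>ctrl d N \<phi> w t ?e ?T \<omega> $ i\<bar> \<le> Umax" by (simp add: algebra_simps)
    qed
  qed
  show "comb l a b \<in> feasible_set M d m N Umax \<phi> w t"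
    unfolding c feasible_set_def using ec Tc sc AEc by auto
  have i1: "integrable M (stage_cost d m N \<kappa> A B Q Qf R \<phi> w \<nu> t x \<eta>1 \<Theta>1)" by (rule E_stage(1)[OF e1 T1 x])
  have i2: "integrable M (stage_cost d m N \<kappa> A B Q Qf R \<phi> w \<nu> t x \<eta>2 \<Theta>2)" by (rule E_stage(1)[OF e2 T2 x])
  have ic: "integrable M (stage_cost d m N \<kappa> A B Q Qf R \<phi> w \<nu> t x ?e ?T)" by (rule E_stage(1)[OF ec Tc x])
  have "(\<integral>\<omega>. stage_cost d m N \<kappa> A B Q Qf R \<phi> w \<nu> t x ?e ?T \<omega> \<partial>M)
     \<le> (\<integral>\<omega>. l * stage_cost d m N \<kappa> A B Q Qf R \<phi> w \<nu> t x \<eta>1 \<Theta>1 \<omega>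
            + (1 - l) * stage_cost d m N \<kappa> A B Q Qf R \<phi> w \<nu> t x \<eta>2 \<Theta>2 \<omega> \<partial>M)"
    by (rule integral_mono) (use ic i1 i2 stage_comb[OF e1 e2 T1 T2 x _ _ Qp Rp] l in auto)
  also have "\<dots> = l * (\<integral>\<omega>. stage_cost d m N \<kappa> A B Q Qf R \<phi> w \<nu> t x \<eta>1 \<Theta>1 \<omega> \<partial>M)
      + (1 - l) * (\<integral>\<omega>. stage_cost d m N \<kappa> A B Q Qf R \<phi> w \<nu> t x \<eta>2 \<Theta>2 \<omega> \<partial>M)"
    using i1 i2 by simp
  finally show "(case comb l a b of (\<eta>, \<Theta>) \<Rightarrow> \<integral>\<omega>. stage_cost d m N \<kappa> A B Q Qf R \<phi> w \<nu> t x \<eta> \<Theta> \<omega> \<partial>M)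
     \<le> l * (case a of (\<eta>, \<Theta>) \<Rightarrow> \<integral>\<omega>. stage_cost d m N \<kappa> A B Q Qf R \<phi> w \<nu> t x \<eta> \<Theta> \<omega> \<partial>M)
       + (1 - l) * (case b of (\<eta>, \<Theta>) \<Rightarrow> \<integral>\<omega>. stage_cost d m N \<kappa> A B Q Qf R \<phi> w \<nu> t x \<eta> \<Theta> \<omega> \<partial>M)"
    unfolding a b by (simp add: comb_def)
qed

lemma feasible_nonempty: assumes "0 < Umax" shows "feasible_set M d m N Umax \<phi> w t \<noteq> {}"
proof -
  have "(0\<^sub>v (N * m), 0\<^sub>m (N * m) ((N - 1) * d)) \<in> feasible_set M d m N Umax \<phi> w t"
    unfolding feasible_set_def strict_lower_block_def
    using assms by (auto simp: ctrl_idx u_def)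
  then show ?thesis by auto
qed

lemma tightened_feasible: assumes "\<eta> \<in> carrier_vec (N * m)" "\<Theta> \<in> carrier_mat (N * m) ((N - 1) * d)"
    "strict_lower_block d m N \<Theta>" "tightened d m N Umax \<phi>max \<eta> \<Theta>"
  shows "(\<eta>, \<Theta>) \<in> feasible_set M d m N Umax \<phi> w t"
proof -
  have "\<forall>\<omega>. \<forall>i < N * m. \<bar>ctrl d N \<phi> w t \<eta> \<Theta> \<omega> $ i\<bar> \<le> Umax"
  proof (intro allI impI)
    fix \<omega> i assume i: "i < N * m"
    have "\<bar>ctrl d N \<phi> w t \<eta> \<Theta> \<omega> $ i\<bar> \<le> \<bar>\<eta> $ i\<bar> + (\<Sum>k<(N - 1) * d. \<bar>\<Theta> $$ (i,k)\<bar> * \<phi>max)"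
      using ctrl_idx[OF assms(1,2) i] u_bound by simp
    also have "\<dots> = \<bar>\<eta> $ i\<bar> + (\<Sum>k<(N - 1) * d. \<bar>\<Theta> $$ (i,k)\<bar>) * \<phi>max"
      by (simp add: sum_distrib_right)
    also have "\<dots> \<le> Umax" using assms(4) i unfolding tightened_def by auto
    finally show "\<bar>ctrl d N \<phi> w t \<eta> \<Theta> \<omega> $ i\<bar> \<le> Umax" .
  qed
  then show ?thesis unfolding feasible_set_def using assms by auto
qed

end

theorem theorem1:
  fixes M :: "'w measure"
    and d m N \<kappa> t :: nat
    and A B Q Qf R :: "real mat"
    and x :: "real Matrix.vec"
    and Umax p \<phi>max :: real
    and w :: "nat \<Rightarrow> 'w \<Rightarrow> nat \<Rightarrow> real"
    and \<nu> :: "nat \<Rightarrow> 'w \<Rightarrow> real"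
    and \<phi> :: "nat \<Rightarrow> (nat \<Rightarrow> real) \<Rightarrow> nat \<Rightarrow> real"
  assumes P: "prob_space M"
    and dimA: "A \<in> carrier_mat d d" and dimB: "B \<in> carrier_mat d m"
    and dimQ: "Q \<in> carrier_mat d d" and dimQf: "Qf \<in> carrier_mat d d"
    and dimR: "R \<in> carrier_mat m m"
    and Q_sym: "Q\<^sup>T = Q" and Q_psd: "\<forall>v \<in> carrier_vec d. 0 \<le> scalar_prod v (mult_mat_vec Q v)"
    and Qf_sym: "Qf\<^sup>T = Qf" and Qf_psd: "\<forall>v \<in> carrier_vec d. 0 \<le> scalar_prod v (mult_mat_vec Qf v)"
    and R_sym: "R\<^sup>T = R"
    and R_pd: "\<forall>v \<in> carrier_vec m. v \<noteq> 0\<^sub>v m \<longrightarrow> 0 < scalar_prod v (mult_mat_vec R v)"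
    and kappa: "1 \<le> \<kappa>" "\<kappa> \<le> N"
    and Umax: "0 < Umax"
    and p: "0 < p" "p \<le> 1"
    \<comment> \<open>noise: i.i.d., zero mean, bounded fourth moments, symmetric components\<close>
    and w_ident: "\<forall>s. distr M (PiM {..<d} (\<lambda>_. borel)) (\<lambda>\<omega>. restrict (w s \<omega>) {..<d})
                     = distr M (PiM {..<d} (\<lambda>_. borel)) (\<lambda>\<omega>. restrict (w 0 \<omega>) {..<d})"
    and w_mean: "\<forall>s. \<forall>j < d. integrable M (\<lambda>\<omega>. w s \<omega> j) \<and> (\<integral>\<omega>. w s \<omega> j \<partial>M) = 0"
    and w_4th: "\<forall>s. \<forall>j < d. integrable M (\<lambda>\<omega>. (w s \<omega> j) ^ 4)"
    and w_symm: "\<forall>s. \<forall>j < d. distr M borel (\<lambda>\<omega>. w s \<omega> j) = distr M borel (\<lambda>\<omega>. - w s \<omega> j)"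
    \<comment> \<open>dropouts: i.i.d. Bernoulli(p), independent of the noise\<close>
    and nu_vals: "\<forall>s. \<forall>\<omega> \<in> space M. \<nu> s \<omega> \<in> {0, 1}"
    and nu_prob: "\<forall>s. measure M {\<omega> \<in> space M. \<nu> s \<omega> = 1} = p"
    \<comment> \<open>joint independence: (w_s)_s i.i.d., (nu_s)_s i.i.d., and the two sequences independent\<close>
    and indep: "prob_space.indep_vars M
                  (\<lambda>k. case k of Inl s \<Rightarrow> PiM {..<d} (\<lambda>_. borel) | Inr s \<Rightarrow> PiM {0} (\<lambda>_. borel))
                  (\<lambda>k \<omega>. case k of Inl s \<Rightarrow> restrict (w s \<omega>) {..<d}
                                 | Inr s \<Rightarrow> restrict (\<lambda>_. \<nu> s \<omega>) {0::nat})
                  (UNIV :: (nat + nat) set)"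
    \<comment> \<open>the nonlinearities varphi_1 .. varphi_(N-1)\<close>
    and phi_meas: "\<forall>i \<in> {1..N - 1}. (\<lambda>v. restrict (\<phi> i (restrict v {..<d})) {..<d})
                     \<in> PiM {..<d} (\<lambda>_. borel) \<rightarrow>\<^sub>M PiM {..<d} (\<lambda>_. borel)"
    and phi_odd: "\<forall>i \<in> {1..N - 1}. \<forall>v. \<forall>j < d.
                     \<phi> i (restrict (\<lambda>k. - v k) {..<d}) j = - \<phi> i (restrict v {..<d}) j"
    and phi_bound: "\<forall>i \<in> {1..N - 1}. \<forall>v. \<forall>j < d. \<bar>\<phi> i v j\<bar> \<le> \<phi>max"
    and phi_mean: "\<forall>i \<in> {1..N - 1}. \<forall>s. \<forall>j < d.
                     (\<integral>\<omega>. \<phi> i (restrict (w s \<omega>) {..<d}) j \<partial>M) = 0"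
    and t: "\<kappa> dvd t"
    and x: "x \<in> carrier_vec d"
  shows
    "convex_problem (feasible_set M d m N Umax \<phi> w t)
        (\<lambda>(\<eta>, \<Theta>). \<integral>\<omega>. stage_cost d m N \<kappa> A B Q Qf R \<phi> w \<nu> t x \<eta> \<Theta> \<omega> \<partial>M)
     \<and> feasible_set M d m N Umax \<phi> w t \<noteq> {}
     \<and> (\<forall>\<eta> \<Theta>. \<eta> \<in> carrier_vec (N * m) \<and> \<Theta> \<in> carrier_mat (N * m) ((N - 1) * d)
           \<and> strict_lower_block d m N \<Theta> \<longrightarrow>
          integrable M (stage_cost d m N \<kappa> A B Q Qf R \<phi> w \<nu> t x \<eta> \<Theta>)
          \<and> (\<integral>\<omega>. stage_cost d m N \<kappa> A B Q Qf R \<phi> w \<nu> t x \<eta> \<Theta> \<omega> \<partial>M)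
             = tractable_obj M d m N \<kappa> A B Q Qf R \<phi> w \<nu> t x \<eta> \<Theta>)
     \<and> (\<forall>\<eta> \<Theta>. \<eta> \<in> carrier_vec (N * m) \<and> \<Theta> \<in> carrier_mat (N * m) ((N - 1) * d)
           \<and> strict_lower_block d m N \<Theta> \<and> tightened d m N Umax \<phi>max \<eta> \<Theta> \<longrightarrow>
          (\<eta>, \<Theta>) \<in> feasible_set M d m N Umax \<phi> w t)"
proof -
  have C: "ctx M d N w \<nu> \<phi> \<phi>max"
    by (intro ctx.intro ctx_axioms.intro P nu_vals indep phi_meas phi_bound phi_mean w_mean w_4th)
  have Qp: "\<And>v. 0 \<le> bil (\<lambda>a b. calQ d N Q Qf $$ (a,b)) (Suc N * d) v v"
    by (rule calQ_psd[OF dimQ dimQf Q_psd Qf_psd])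
  have Rp: "\<And>v. 0 \<le> bil (\<lambda>a b. calR m N R $$ (a,b)) (N * m) v v"
    by (rule calR_psd[OF dimR R_pd])
  show ?thesis
  proof (intro conjI allI impI)
    show "convex_problem (feasible_set M d m N Umax \<phi> w t)
        (\<lambda>(\<eta>, \<Theta>). \<integral>\<omega>. stage_cost d m N \<kappa> A B Q Qf R \<phi> w \<nu> t x \<eta> \<Theta> \<omega> \<partial>M)"
      by (rule ctx.convex_main[OF C x Qp Rp])
    show "feasible_set M d m N Umax \<phi> w t \<noteq> {}"
      by (rule ctx.feasible_nonempty[OF C Umax])
  next
    fix \<eta> :: "real Matrix.vec" and \<Theta> :: "real mat" assume h: "\<eta> \<in> carrier_vec (N * m) \<and> \<Theta> \<in> carrier_mat (N * m) ((N - 1) * d)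
           \<and> strict_lower_block d m N \<Theta>"
    show "integrable M (stage_cost d m N \<kappa> A B Q Qf R \<phi> w \<nu> t x \<eta> \<Theta>)"
      using h by (intro ctx.E_stage(1)[OF C]) (auto simp: x)
    show "(\<integral>\<omega>. stage_cost d m N \<kappa> A B Q Qf R \<phi> w \<nu> t x \<eta> \<Theta> \<omega> \<partial>M)
             = tractable_obj M d m N \<kappa> A B Q Qf R \<phi> w \<nu> t x \<eta> \<Theta>"
      using h by (intro ctx.E_final[OF C]) (auto simp: x dimQ dimQf Q_sym Qf_sym dimR)
  next
    fix \<eta> :: "real Matrix.vec" and \<Theta> :: "real mat" assume h: "\<eta> \<in> carrier_vec (N * m) \<and> \<Theta> \<in> carrier_mat (N * m) ((N - 1) * d)
           \<and> strict_lower_block d m N \<Theta> \<and> tightened d m N Umax \<phi>max \<eta> \<Theta>"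
    show "(\<eta>, \<Theta>) \<in> feasible_set M d m N Umax \<phi> w t"
      using h by (intro ctx.tightened_feasible[OF C]) auto
  qed
qed

end
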